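(* Let $\sigma : \mathcal{S} \to \mathcal{A}^\perp \parallel \mathcal{B}$ and $\tau : \mathcal{T} \to \mathcal{B}^\perp \parallel \mathcal{C}$ be negative single-threaded $\sim$-strategies with $\mathcal{A}, \mathcal{B}, \mathcal{C}$ negative thin concurrent games. Then, $\tau \odot \sigma : \mathcal{T} \odot \mathcal{S} \to \mathcal{A}^\perp \parallel \mathcal{C}$ is negative and single-threaded.
   Context: $e \rightarrow e'$ denotes immediate causal dependency ($e<e'$ with nothing strictly between). A $\sim$-strategy $\sigma:\mathcal{S}\to\mathcal{A}$ is a map of essps (event structures with symmetry and polarities) which is courteous (if $s_1 \rightarrow s_2$ with $\mathrm{pol}(s_1)=+$ or $\mathrm{pol}(s_2)=-$ then $\sigma s_1 \rightarrow \sigma s_2$), strong-receptive (extensions by pairs of negative events of images of isomorphisms of $\mathcal{S}$ lift uniquely), and thin. A thin concurrent game is a race-preserving thin-style essp with receptive thin sub-symmetries; it (or an esp) is negative if all its minimal events are negative, and a strategy is negative if $S$ is. An esp is single-threaded if (1) for every $a$, $[a]$ has exactly one minimal event, and (2) whenever a configuration $x$ extends by $a_1$ and by $a_2$ but $x\cup\{a_1,a_2\}$ is not a configuration, then $[a_1]\cap[a_2]\neq\emptyset$; a $\sim$-strategy is single-threaded if $\mathcal{S}$ is. The composition $\tau\odot\sigma$ is the pullback $(\mathcal{S}\parallel\mathcal{C})\circledast(\mathcal{A}\parallel\mathcal{T})$ of $\sigma\parallel\mathcal{C}$ and $\mathcal{A}\parallel\tau$ projected onto events not mapping to $\mathcal{B}$.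 *)

theory Defs
  imports Main
begin

record 'e es = Ev :: "'e set" Le :: "'e \<Rightarrow> 'e \<Rightarrow> bool" Con :: "'e set \<Rightarrow> bool"
record 'e esp = "'e es" + pol :: "'e \<Rightarrow> bool"   (* True = positive, False = negative *)
record 'e essp = "'e esp" + Sym :: "('e \<times> 'e) set set"
record 'e tcg = "'e essp" + SymP :: "('e \<times> 'e) set set" SymN :: "('e \<times> 'e) set set"

definition lt :: "('e,'z) es_scheme \<Rightarrow> 'e \<Rightarrow> 'e \<Rightarrow> bool" where
  "lt E a b \<longleftrightarrow> Le E a b \<and> a \<noteq> b"

definition imm :: "('e,'z) es_scheme \<Rightarrow> 'e \<Rightarrow> 'e \<Rightarrow> bool" where
  "imm E a b \<longleftrightarrow> lt E a b \<and> \<not> (\<exists>c. lt E a c \<and> lt E c b)"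

definition down :: "('e,'z) es_scheme \<Rightarrow> 'e \<Rightarrow> 'e set" where
  "down E a = {e. Le E e a}"

definition is_es :: "('e,'z) es_scheme \<Rightarrow> bool" where
  "is_es E \<longleftrightarrow>
     (\<forall>a b. Le E a b \<longrightarrow> a \<in> Ev E \<and> b \<in> Ev E) \<and>
     (\<forall>a\<in>Ev E. Le E a a) \<and>
     (\<forall>a b. Le E a b \<and> Le E b a \<longrightarrow> a = b) \<and>
     (\<forall>a b c. Le E a b \<and> Le E b c \<longrightarrow> Le E a c) \<and>
     (\<forall>a\<in>Ev E. finite (down E a)) \<and>
     (\<forall>X. Con E X \<longrightarrow> finite X \<and> X \<subseteq> Ev E) \<and>
     Con E {} \<and>
     (\<forall>a\<in>Ev E. Con E {a}) \<and>
     (\<forall>X Y. Con E Y \<and> X \<subseteq> Y \<longrightarrow> Con E X) \<and>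
     (\<forall>X a b. Con E X \<and> b \<in> X \<and> Le E a b \<longrightarrow> Con E (insert a X))"

definition conf :: "('e,'z) es_scheme \<Rightarrow> 'e set set" where
  "conf E = {x. finite x \<and> x \<subseteq> Ev E \<and> (\<forall>b\<in>x. \<forall>a. Le E a b \<longrightarrow> a \<in> x) \<and> Con E x}"

definition extends :: "('e,'z) es_scheme \<Rightarrow> 'e set \<Rightarrow> 'e \<Rightarrow> bool" where
  "extends E x a \<longleftrightarrow> x \<in> conf E \<and> a \<notin> x \<and> insert a x \<in> conf E"

definition minimal :: "('e,'z) es_scheme \<Rightarrow> 'e \<Rightarrow> bool" where
  "minimal E a \<longleftrightarrow> a \<in> Ev E \<and> (\<forall>b. Le E b a \<longrightarrow> b = a)"

definition negative :: "('e,'z) esp_scheme \<Rightarrow> bool" where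
  "negative E \<longleftrightarrow> (\<forall>a. minimal E a \<longrightarrow> \<not> pol E a)"

definition single_threaded :: "('e,'z) es_scheme \<Rightarrow> bool" where
  "single_threaded E \<longleftrightarrow>
     (\<forall>a\<in>Ev E. \<exists>!m. m \<in> down E a \<and> minimal E m) \<and>
     (\<forall>x a1 a2. extends E x a1 \<and> extends E x a2 \<and> insert a1 (insert a2 x) \<notin> conf E
        \<longrightarrow> down E a1 \<inter> down E a2 \<noteq> {})"

definition is_cbij :: "('e,'z) es_scheme \<Rightarrow> ('e \<times> 'e) set \<Rightarrow> bool" where
  "is_cbij E \<theta> \<longleftrightarrow> Domain \<theta> \<in> conf E \<and> Range \<theta> \<in> conf E \<and>
     (\<forall>a b b'. (a,b) \<in> \<theta> \<and> (a,b') \<in> \<theta> \<longrightarrow> b = b') \<and>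
     (\<forall>a a' b. (a,b) \<in> \<theta> \<and> (a',b) \<in> \<theta> \<longrightarrow> a = a')"

definition iso_family :: "('e,'z) es_scheme \<Rightarrow> ('e \<times> 'e) set set \<Rightarrow> bool" where
  "iso_family E S \<longleftrightarrow>
     (\<forall>\<theta>\<in>S. is_cbij E \<theta>) \<and>
     (\<forall>x\<in>conf E. Id_on x \<in> S) \<and>
     (\<forall>\<theta>\<in>S. \<theta>\<inverse> \<in> S) \<and>
     (\<forall>\<theta>\<in>S. \<forall>\<phi>\<in>S. Range \<theta> = Domain \<phi> \<longrightarrow> \<theta> O \<phi> \<in> S) \<and>
     (\<forall>\<theta>\<in>S. \<forall>x\<in>conf E. x \<subseteq> Domain \<theta> \<longrightarrow> \<theta> \<inter> (x \<times> UNIV) \<in> S) \<and>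
     (\<forall>\<theta>\<in>S. \<forall>x\<in>conf E. Domain \<theta> \<subseteq> x \<longrightarrow> (\<exists>\<theta>'\<in>S. \<theta> \<subseteq> \<theta>' \<and> Domain \<theta>' = x))"

definition is_essp :: "('e,'z) essp_scheme \<Rightarrow> bool" where
  "is_essp E \<longleftrightarrow> is_es E \<and> iso_family E (Sym E) \<and>
     (\<forall>\<theta>\<in>Sym E. \<forall>(a,b)\<in>\<theta>. pol E a = pol E b)"

definition race_preserving :: "('e,'z) essp_scheme \<Rightarrow> bool" where
  "race_preserving A \<longleftrightarrow>
     (\<forall>\<theta>\<in>Sym A. \<forall>a1 a2 b1 b2.
        extends A (Domain \<theta>) a1 \<and> extends A (Domain \<theta>) a2 \<and>
        insert a1 (insert a2 (Domain \<theta>)) \<notin> conf A \<and>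
        insert (a1,b1) \<theta> \<in> Sym A \<and> insert (a2,b2) \<theta> \<in> Sym A
        \<longrightarrow> insert b1 (insert b2 (Range \<theta>)) \<notin> conf A)"

definition is_tcg :: "('e,'z) tcg_scheme \<Rightarrow> bool" where
  "is_tcg A \<longleftrightarrow> is_essp A \<and> race_preserving A \<and>
     iso_family A (SymP A) \<and> iso_family A (SymN A) \<and>
     SymP A \<subseteq> Sym A \<and> SymN A \<subseteq> Sym A \<and>
     (\<forall>\<theta>\<in>SymP A \<inter> SymN A. \<forall>(a,b)\<in>\<theta>. a = b) \<and>
     (\<forall>\<theta>\<in>SymN A. \<forall>\<theta>'\<in>Sym A. \<theta> \<subseteq> \<theta>' \<and> (\<forall>(a,b)\<in>\<theta>' - \<theta>. \<not> pol A a) \<longrightarrow> \<theta>' \<in> SymN A) \<and>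
     (\<forall>\<theta>\<in>SymP A. \<forall>\<theta>'\<in>Sym A. \<theta> \<subseteq> \<theta>' \<and> (\<forall>(a,b)\<in>\<theta>' - \<theta>. pol A a) \<longrightarrow> \<theta>' \<in> SymP A)"

definition dual :: "('e,'z) essp_scheme \<Rightarrow> 'e essp" where
  "dual E = \<lparr>Ev = Ev E, Le = Le E, Con = Con E, pol = (\<lambda>e. \<not> pol E e), Sym = Sym E\<rparr>"

definition par :: "('a,'z1) essp_scheme \<Rightarrow> ('b,'z2) essp_scheme \<Rightarrow> ('a + 'b) essp" where
  "par E F = \<lparr>Ev = Inl ` Ev E \<union> Inr ` Ev F,
     Le = (\<lambda>p q. case (p, q) of (Inl a, Inl b) \<Rightarrow> Le E a b | (Inr a, Inr b) \<Rightarrow> Le F a b | _ \<Rightarrow> False),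
     Con = (\<lambda>X. X \<subseteq> Inl ` Ev E \<union> Inr ` Ev F \<and> Con E (Inl -` X) \<and> Con F (Inr -` X)),
     pol = case_sum (pol E) (pol F),
     Sym = {map_prod Inl Inl ` \<theta>1 \<union> map_prod Inr Inr ` \<theta>2 | \<theta>1 \<theta>2. \<theta>1 \<in> Sym E \<and> \<theta>2 \<in> Sym F}\<rparr>"

definition es_map :: "('e,'z1) es_scheme \<Rightarrow> ('f,'z2) es_scheme \<Rightarrow> ('e \<Rightarrow> 'f) \<Rightarrow> bool" where
  "es_map E F f \<longleftrightarrow> (\<forall>a\<in>Ev E. f a \<in> Ev F) \<and> (\<forall>x\<in>conf E. f ` x \<in> conf F \<and> inj_on f x)"

definition essp_map :: "('e,'z1) essp_scheme \<Rightarrow> ('f,'z2) essp_scheme \<Rightarrow> ('e \<Rightarrow> 'f) \<Rightarrow> bool" where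
  "essp_map E F f \<longleftrightarrow> es_map E F f \<and> (\<forall>\<theta>\<in>Sym E. map_prod f f ` \<theta> \<in> Sym F) \<and>
     (\<forall>a\<in>Ev E. pol F (f a) = pol E a)"

definition courteous :: "('e,'z1) esp_scheme \<Rightarrow> ('f,'z2) esp_scheme \<Rightarrow> ('e \<Rightarrow> 'f) \<Rightarrow> bool" where
  "courteous S A \<sigma> \<longleftrightarrow>
     (\<forall>s1 s2. imm S s1 s2 \<and> (pol S s1 \<or> \<not> pol S s2) \<longrightarrow> imm A (\<sigma> s1) (\<sigma> s2))"

definition strong_receptive :: "('e,'z1) essp_scheme \<Rightarrow> ('f,'z2) essp_scheme \<Rightarrow> ('e \<Rightarrow> 'f) \<Rightarrow> bool" where
  "strong_receptive S A \<sigma> \<longleftrightarrow>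
     (\<forall>\<theta>\<in>Sym S. \<forall>a1 a2. \<not> pol A a1 \<and> \<not> pol A a2 \<and>
        extends A (\<sigma> ` Domain \<theta>) a1 \<and> extends A (\<sigma> ` Range \<theta>) a2 \<and>
        insert (a1, a2) (map_prod \<sigma> \<sigma> ` \<theta>) \<in> Sym A
        \<longrightarrow> (\<exists>!p. fst p \<notin> Domain \<theta> \<and> insert p \<theta> \<in> Sym S \<and> \<sigma> (fst p) = a1 \<and> \<sigma> (snd p) = a2))"

definition thin :: "('e,'z) essp_scheme \<Rightarrow> bool" where
  "thin S \<longleftrightarrow> (\<forall>x s1 s2. extends S x s1 \<and> extends S x s2 \<and> pol S s1 \<and>
     insert (s1, s2) (Id_on x) \<in> Sym S \<longrightarrow> s1 = s2)"

definition sim_strategy :: "('e,'z1) essp_scheme \<Rightarrow> ('f,'z2) essp_scheme \<Rightarrow> ('e \<Rightarrow> 'f) \<Rightarrow> bool" where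
  "sim_strategy S A \<sigma> \<longleftrightarrow> is_essp S \<and> is_essp A \<and> essp_map S A \<sigma> \<and>
     courteous S A \<sigma> \<and> strong_receptive S A \<sigma> \<and> thin S"

definition sec_rel :: "('x,'z1) es_scheme \<Rightarrow> ('y,'z2) es_scheme \<Rightarrow> ('x \<times> 'y) set \<Rightarrow> (('x \<times> 'y) \<times> ('x \<times> 'y)) set" where
  "sec_rel X Y \<theta> = {(u, v). u \<in> \<theta> \<and> v \<in> \<theta> \<and> (lt X (fst u) (fst v) \<or> lt Y (snd u) (snd v))}"

(* secured bijections = configurations of the pullback of f and g *)
definition secured_bij :: "('x,'z1) es_scheme \<Rightarrow> ('y,'z2) es_scheme \<Rightarrow> ('x \<Rightarrow> 'w) \<Rightarrow> ('y \<Rightarrow> 'w) \<Rightarrow> ('x \<times> 'y) set \<Rightarrow> bool" where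
  "secured_bij X Y f g \<theta> \<longleftrightarrow>
     fst ` \<theta> \<in> conf X \<and> snd ` \<theta> \<in> conf Y \<and>
     (\<forall>p q q'. (p,q) \<in> \<theta> \<and> (p,q') \<in> \<theta> \<longrightarrow> q = q') \<and>
     (\<forall>p p' q. (p,q) \<in> \<theta> \<and> (p',q) \<in> \<theta> \<longrightarrow> p = p') \<and>
     (\<forall>(p,q)\<in>\<theta>. f p = g q) \<and>
     acyclic (sec_rel X Y \<theta>)"

definition is_top :: "('x,'z1) es_scheme \<Rightarrow> ('y,'z2) es_scheme \<Rightarrow> ('x \<times> 'y) set \<Rightarrow> ('x \<times> 'y) \<Rightarrow> bool" where
  "is_top X Y \<theta> u \<longleftrightarrow> u \<in> \<theta> \<and> \<theta> = {v. (v, u) \<in> (sec_rel X Y \<theta>)\<^sup>*}"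

definition top :: "('x,'z1) es_scheme \<Rightarrow> ('y,'z2) es_scheme \<Rightarrow> ('x \<times> 'y) set \<Rightarrow> ('x \<times> 'y)" where
  "top X Y \<theta> = (THE u. is_top X Y \<theta> u)"

(* the pullback event structure: events are prime secured bijections *)
definition pullback :: "('x,'z1) es_scheme \<Rightarrow> ('y,'z2) es_scheme \<Rightarrow> ('x \<Rightarrow> 'w) \<Rightarrow> ('y \<Rightarrow> 'w) \<Rightarrow> ('x \<times> 'y) set es" where
  "pullback X Y f g =
     (let V = {\<theta>. secured_bij X Y f g \<theta> \<and> (\<exists>u. is_top X Y \<theta> u)} in
      \<lparr>Ev = V, Le = (\<lambda>\<theta> \<theta>'. \<theta> \<in> V \<and> \<theta>' \<in> V \<and> \<theta> \<subseteq> \<theta>'),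
       Con = (\<lambda>Xs. finite Xs \<and> Xs \<subseteq> V \<and> secured_bij X Y f g (\<Union>Xs))\<rparr>)"

(* \<sigma> \<parallel> C, landing in A \<parallel> (B \<parallel> C) via associativity *)
definition lift_l :: "('s \<Rightarrow> 'a + 'b) \<Rightarrow> 's + 'c \<Rightarrow> 'a + ('b + 'c)" where
  "lift_l \<sigma> = case_sum (\<lambda>s. case \<sigma> s of Inl a \<Rightarrow> Inl a | Inr b \<Rightarrow> Inr (Inl b)) (\<lambda>c. Inr (Inr c))"

definition lift_r :: "('t \<Rightarrow> 'b + 'c) \<Rightarrow> 'a + 't \<Rightarrow> 'a + ('b + 'c)" where
  "lift_r \<tau> = case_sum Inl (\<lambda>t. Inr (\<tau> t))"

(* T \<odot> S : the pullback of \<sigma>\<parallel>C and A\<parallel>\<tau>, restricted to events not mapping to B;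
   polarity inherited from S \<parallel> C *)
definition strat_comp :: "('s,'z1) essp_scheme \<Rightarrow> ('t,'z2) essp_scheme \<Rightarrow> ('a,'z3) essp_scheme \<Rightarrow> ('c,'z4) essp_scheme
                    \<Rightarrow> ('s \<Rightarrow> 'a + 'b) \<Rightarrow> ('t \<Rightarrow> 'b + 'c) \<Rightarrow> (('s + 'c) \<times> ('a + 't)) set esp" where
  "strat_comp S T A C \<sigma> \<tau> =
     (let X = par S C; Y = par A T; P = pullback X Y (lift_l \<sigma>) (lift_r \<tau>);
          V = {\<theta> \<in> Ev P. \<forall>b. lift_l \<sigma> (fst (top X Y \<theta>)) \<noteq> Inr (Inl b)} in
      \<lparr>Ev = V, Le = (\<lambda>\<theta> \<theta>'. \<theta> \<in> V \<and> \<theta>' \<in> V \<and> Le P \<theta> \<theta>'),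
       Con = (\<lambda>Xs. Xs \<subseteq> V \<and> Con P Xs),
       pol = (\<lambda>\<theta>. pol X (fst (top X Y \<theta>)))\<rparr>)"

end

theory Submission
  imports Defs
begin


lemma es_facts:
  assumes "is_es E"
  shows "Le E a b \<Longrightarrow> a \<in> Ev E \<and> b \<in> Ev E"
    and "a \<in> Ev E \<Longrightarrow> Le E a a"
    and "Le E a b \<Longrightarrow> Le E b a \<Longrightarrow> a = b"
    and "Le E a b \<Longrightarrow> Le E b c \<Longrightarrow> Le E a c"
    and "a \<in> Ev E \<Longrightarrow> finite (down E a)"
    and "Con E X \<Longrightarrow> finite X \<and> X \<subseteq> Ev E"
    and "Con E {}"
    and "a \<in> Ev E \<Longrightarrow> Con E {a}"
    and "Con E Y \<Longrightarrow> X \<subseteq> Y \<Longrightarrow> Con E X"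
    and "Con E X \<Longrightarrow> b \<in> X \<Longrightarrow> Le E a b \<Longrightarrow> Con E (insert a X)"
  using assms unfolding is_es_def by (meson)+

lemma conf_down: "x \<in> conf E \<Longrightarrow> b \<in> x \<Longrightarrow> Le E a b \<Longrightarrow> a \<in> x"
  unfolding conf_def by blast

lemma down_conf:
  assumes E: "is_es E" and a: "a \<in> Ev E"
  shows "down E a \<in> conf E"
proof -
  have fin: "finite (down E a)" using es_facts(5)[OF E a] .
  have "\<And>F. finite F \<Longrightarrow> F \<subseteq> down E a \<Longrightarrow> Con E (insert a F)"
  proof -
    fix F :: "'a set" assume "finite F" "F \<subseteq> down E a"
    then show "Con E (insert a F)"
    proof (induction F rule: finite_induct)
      case empty then show ?case using es_facts(8)[OF E a] by simp
    next
      case (insert e F)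
      then have "Con E (insert a F)" by auto
      moreover have "Le E e a" using insert.prems by (auto simp: down_def)
      ultimately have "Con E (insert e (insert a F))" using es_facts(10)[OF E] by blast
      then show ?case by (simp add: insert_commute)
    qed
  qed
  from this[OF fin order_refl] have "Con E (insert a (down E a))" .
  moreover have "a \<in> down E a" using es_facts(2)[OF E a] by (simp add: down_def)
  ultimately have "Con E (down E a)" by (simp add: insert_absorb)
  moreover have "down E a \<subseteq> Ev E" using es_facts(1)[OF E] by (auto simp: down_def)
  moreover have "\<forall>b\<in>down E a. \<forall>c. Le E c b \<longrightarrow> c \<in> down E a"
    using es_facts(4)[OF E] by (auto simp: down_def)
  ultimately show ?thesis using fin unfolding conf_def by blast
qed

lemma conf_Con: "x \<in> conf E \<Longrightarrow> Con E x" unfolding conf_def by blast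
lemma conf_fin: "x \<in> conf E \<Longrightarrow> finite x" unfolding conf_def by blast
lemma conf_Ev: "x \<in> conf E \<Longrightarrow> x \<subseteq> Ev E" unfolding conf_def by blast
lemma confI: "finite x \<Longrightarrow> x \<subseteq> Ev E \<Longrightarrow> (\<And>a b. b \<in> x \<Longrightarrow> Le E a b \<Longrightarrow> a \<in> x) \<Longrightarrow> Con E x \<Longrightarrow> x \<in> conf E"
  unfolding conf_def by blast
lemma conf_Un: "u \<in> conf E \<Longrightarrow> v \<in> conf E \<Longrightarrow> Con E (u \<union> v) \<Longrightarrow> u \<union> v \<in> conf E"
proof (rule confI)
  assume u: "u \<in> conf E" and v: "v \<in> conf E" and c: "Con E (u \<union> v)"
  show "finite (u \<union> v)" using conf_fin[OF u] conf_fin[OF v] by simp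
  show "u \<union> v \<subseteq> Ev E" using conf_Ev[OF u] conf_Ev[OF v] by simp
  show "Con E (u \<union> v)" by (rule c)
  fix a b assume "b \<in> u \<union> v" "Le E a b"
  then show "a \<in> u \<union> v" using conf_down[OF u] conf_down[OF v] by blast
qed

definition root :: "('e,'z) es_scheme \<Rightarrow> 'e \<Rightarrow> 'e" where
  "root E a = (THE m. m \<in> down E a \<and> minimal E m)"

lemma root_props:
  assumes "single_threaded E" "a \<in> Ev E"
  shows "Le E (root E a) a" "minimal E (root E a)"
proof -
  have "\<exists>!m. m \<in> down E a \<and> minimal E m" using assms unfolding single_threaded_def by blast
  from theI'[OF this] show "Le E (root E a) a" "minimal E (root E a)"
    unfolding root_def down_def by auto
qed

lemma root_unique:
  assumes "single_threaded E" "a \<in> Ev E" "minimal E m" "Le E m a"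
  shows "root E a = m"
proof -
  have "\<exists>!m. m \<in> down E a \<and> minimal E m" using assms unfolding single_threaded_def by blast
  then show ?thesis unfolding root_def using assms(3,4)
    by (intro the1_equality) (auto simp: down_def)
qed

lemma root_mono:
  assumes E: "is_es E" and st: "single_threaded E" and le: "Le E a b"
  shows "root E a = root E b"
proof -
  have ab: "a \<in> Ev E" "b \<in> Ev E" using es_facts(1)[OF E le] by auto
  show ?thesis
    using root_unique[OF st ab(2) root_props(2)[OF st ab(1)]]
      es_facts(4)[OF E root_props(1)[OF st ab(1)] le] by simp
qed

lemma root_min:
  assumes E: "is_es E" and st: "single_threaded E" and m: "minimal E m"
  shows "root E m = m"
  using root_unique[OF st _ m] m es_facts(2)[OF E] unfolding minimal_def by auto

lemma minimal_conf:
  assumes E: "is_es E" and m: "minimal E m"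
  shows "{m} \<in> conf E"
  using m es_facts(8)[OF E] unfolding minimal_def conf_def by auto

lemma st_join:
  assumes E: "is_es E" and st: "single_threaded E"
    and y1: "y1 \<in> conf E" and y2: "y2 \<in> conf E" and disj: "y1 \<inter> y2 = {}"
  shows "y1 \<union> y2 \<in> conf E"
proof (rule ccontr)
  assume nc: "y1 \<union> y2 \<notin> conf E"
  have ncon: "\<not> Con E (y1 \<union> y2)" using nc y1 y2 conf_Un by blast
  define Q where "Q = (\<lambda>z1 z2. z1 \<in> conf E \<and> z1 \<subseteq> y1 \<and> z2 \<in> conf E \<and> z2 \<subseteq> y2 \<and> \<not> Con E (z1 \<union> z2))"
  have "Q y1 y2" using ncon y1 y2 unfolding Q_def by auto
  then have "(\<lambda>p. Q (fst p) (snd p)) (y1, y2)" by simp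
  from ex_has_least_nat[where P="\<lambda>p. Q (fst p) (snd p)", OF this, of "\<lambda>p. card (fst p) + card (snd p)"]
  obtain p where p1: "Q (fst p) (snd p)" and p2: "\<forall>p'. Q (fst p') (snd p') \<longrightarrow> card (fst p) + card (snd p) \<le> card (fst p') + card (snd p')"
    by blast
  define z1 where "z1 = fst p"
  define z2 where "z2 = snd p"
  have Qz: "Q z1 z2" using p1 unfolding z1_def z2_def .
  have least: "\<And>w1 w2. Q w1 w2 \<Longrightarrow> card z1 + card z2 \<le> card w1 + card w2"
    using p2 unfolding z1_def z2_def by (metis fst_conv snd_conv)
  have z1: "z1 \<in> conf E" "z1 \<subseteq> y1" and z2: "z2 \<in> conf E" "z2 \<subseteq> y2" and nz: "\<not> Con E (z1 \<union> z2)"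
    using Qz unfolding Q_def by auto
  have fz1: "finite z1" and fz2: "finite z2" using z1 z2 conf_fin by auto
  have "z1 \<noteq> {}" using nz z2 conf_Con by fastforce
  have "z2 \<noteq> {}" using nz z1 conf_Con by fastforce
  have maxex: "\<And>z. z \<in> conf E \<Longrightarrow> z \<noteq> {} \<Longrightarrow> \<exists>e\<in>z. z - {e} \<in> conf E"
  proof -
    fix z assume z: "z \<in> conf E" "z \<noteq> {}"
    have fz: "finite z" and zE: "z \<subseteq> Ev E" using conf_fin[OF z(1)] conf_Ev[OF z(1)] by auto
    define M where "M = Max ((\<lambda>e. card (down E e)) ` z)"
    have "M \<in> (\<lambda>e. card (down E e)) ` z" unfolding M_def using fz z(2) by (intro Max_in) auto
    then obtain e where e0: "e \<in> z" "card (down E e) = M" by blast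
    have "\<forall>e'\<in>z. card (down E e') \<le> M" unfolding M_def using fz by auto
    with e0 have e: "e \<in> z" "\<forall>e'\<in>z. card (down E e') \<le> card (down E e)" by auto
    have "z - {e} \<in> conf E"
    proof -
      have "\<forall>b\<in>z - {e}. \<forall>a. Le E a b \<longrightarrow> a \<in> z - {e}"
      proof (intro ballI allI impI)
        fix b a assume b: "b \<in> z - {e}" and le: "Le E a b"
        have "a \<in> z" using conf_down[OF z(1)] b le by blast
        moreover have "a \<noteq> e"
        proof
          assume "a = e"
          have bE: "b \<in> Ev E" using b zE by auto
          have "down E e \<subseteq> down E b" using le \<open>a = e\<close> es_facts(4)[OF E] by (auto simp: down_def)
          moreover have "b \<in> down E b" "b \<notin> down E e"
            using es_facts(2)[OF E bE] es_facts(3)[OF E] le \<open>a = e\<close> b by (auto simp: down_def)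
          ultimately have "down E e \<subset> down E b" by blast
          then have "card (down E e) < card (down E b)" using es_facts(5)[OF E bE] by (simp add: psubset_card_mono)
          with e b show False by auto
        qed
        ultimately show "a \<in> z - {e}" by auto
      qed
      moreover have "Con E (z - {e})" using conf_Con[OF z(1)] es_facts(9)[OF E, of z "z - {e}"] by blast
      moreover have "finite (z - {e})" "z - {e} \<subseteq> Ev E" using fz zE by auto
      ultimately show ?thesis using confI by blast
    qed
    then show "\<exists>e\<in>z. z - {e} \<in> conf E" using e by blast
  qed
  obtain e1 where e1: "e1 \<in> z1" "z1 - {e1} \<in> conf E" using maxex[OF z1(1) \<open>z1 \<noteq> {}\<close>] by blast
  obtain e2 where e2: "e2 \<in> z2" "z2 - {e2} \<in> conf E" using maxex[OF z2(1) \<open>z2 \<noteq> {}\<close>] by blast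
  have c1: "card (z1 - {e1}) < card z1" by (rule card_Diff1_less[OF fz1 e1(1)])
  have c2: "card (z2 - {e2}) < card z2" by (rule card_Diff1_less[OF fz2 e2(1)])
  have a1: "Con E ((z1 - {e1}) \<union> z2)"
  proof (rule ccontr)
    assume "\<not> Con E ((z1 - {e1}) \<union> z2)"
    then have "Q (z1 - {e1}) z2" using e1 z1 z2 unfolding Q_def by auto
    from least[OF this] c1 show False by simp
  qed
  have a2: "Con E (z1 \<union> (z2 - {e2}))"
  proof (rule ccontr)
    assume "\<not> Con E (z1 \<union> (z2 - {e2}))"
    then have "Q z1 (z2 - {e2})" using e2 z1 z2 unfolding Q_def by auto
    from least[OF this] c2 show False by simp
  qed
  define z where "z = (z1 - {e1}) \<union> (z2 - {e2})"
  note downu = conf_Un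
  have zc: "z \<in> conf E" unfolding z_def
  proof (rule downu[OF e1(2) e2(2)])
    show "Con E ((z1 - {e1}) \<union> (z2 - {e2}))" by (rule es_facts(9)[OF E a1]) blast
  qed
  have e1n: "e1 \<notin> z2" using e1(1) z1(2) z2(2) disj by blast
  have e2n: "e2 \<notin> z1" using e2(1) z1(2) z2(2) disj by blast
  have "insert e1 z = z1 \<union> (z2 - {e2})" unfolding z_def using e1 by auto
  then have i1: "insert e1 z \<in> conf E" using downu[OF z1(1) e2(2) a2] by simp
  have "insert e2 z = (z1 - {e1}) \<union> z2" unfolding z_def using e2 by auto
  then have i2: "insert e2 z \<in> conf E" using downu[OF e1(2) z2(1) a1] by simp
  have "insert e1 (insert e2 z) = z1 \<union> z2" unfolding z_def using e1 e2 by auto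
  then have i12: "insert e1 (insert e2 z) \<notin> conf E" using nz conf_Con by metis
  have "e1 \<notin> z" "e2 \<notin> z" using e1n e2n unfolding z_def by auto
  then have "extends E z e1" "extends E z e2" using zc i1 i2 unfolding extends_def by blast+
  then have "down E e1 \<inter> down E e2 \<noteq> {}" using st i12 unfolding single_threaded_def by blast
  then obtain c where "Le E c e1" "Le E c e2" by (auto simp: down_def)
  then have "c \<in> y1" "c \<in> y2" using conf_down[OF y1] conf_down[OF y2] e1(1) e2(1) z1(2) z2(2) by blast+
  then show False using disj by blast
qed



lemma par_simps:
  "Ev (par E F) = Inl ` Ev E \<union> Inr ` Ev F"
  "Le (par E F) (Inl a) (Inl b) = Le E a b"
  "Le (par E F) (Inr c) (Inr d) = Le F c d"
  "Le (par E F) (Inl a) (Inr d) = False"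
  "Le (par E F) (Inr c) (Inl b) = False"
  "Con (par E F) x = (x \<subseteq> Inl ` Ev E \<union> Inr ` Ev F \<and> Con E (Inl -` x) \<and> Con F (Inr -` x))"
  "pol (par E F) (Inl a) = pol E a" "pol (par E F) (Inr c) = pol F c"
  by (simp_all add: par_def)

lemma Le_par_cases:
  "Le (par E F) p q \<Longrightarrow> (\<exists>a b. p = Inl a \<and> q = Inl b \<and> Le E a b) \<or> (\<exists>c d. p = Inr c \<and> q = Inr d \<and> Le F c d)"
  by (cases p; cases q) (auto simp: par_def)

lemma dual_simps:
  "Ev (dual E) = Ev E" "Le (dual E) = Le E" "Con (dual E) = Con E" "pol (dual E) a = (\<not> pol E a)"
  by (simp_all add: dual_def)

lemma par_conf_l:
  assumes "x \<in> conf (par E F)" shows "Inl -` x \<in> conf E"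
proof (rule confI)
  have x: "finite x" "x \<subseteq> Ev (par E F)" "Con (par E F) x" using assms conf_fin conf_Ev conf_Con by blast+
  show "finite (Inl -` x)" using x(1) by (simp add: finite_vimageI)
  show "Inl -` x \<subseteq> Ev E" using x(2) by (auto simp: par_simps)
  show "Con E (Inl -` x)" using x(3) by (simp add: par_simps)
  fix a b assume "b \<in> Inl -` x" "Le E a b"
  then show "a \<in> Inl -` x" using conf_down[OF assms, of "Inl b" "Inl a"] by (simp add: par_simps)
qed

lemma par_conf_r:
  assumes "x \<in> conf (par E F)" shows "Inr -` x \<in> conf F"
proof (rule confI)
  have x: "finite x" "x \<subseteq> Ev (par E F)" "Con (par E F) x" using assms conf_fin conf_Ev conf_Con by blast+
  show "finite (Inr -` x)" using x(1) by (simp add: finite_vimageI)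
  show "Inr -` x \<subseteq> Ev F" using x(2) by (auto simp: par_simps)
  show "Con F (Inr -` x)" using x(3) by (simp add: par_simps)
  fix a b assume "b \<in> Inr -` x" "Le F a b"
  then show "a \<in> Inr -` x" using conf_down[OF assms, of "Inr b" "Inr a"] by (simp add: par_simps)
qed

lemma sub_conf:
  assumes E: "is_es E" and y: "y \<in> conf E" and sub: "y' \<subseteq> y"
    and dc: "\<And>a b. b \<in> y' \<Longrightarrow> Le E a b \<Longrightarrow> a \<in> y'"
  shows "y' \<in> conf E"
proof (rule confI)
  show "finite y'" using conf_fin[OF y] sub finite_subset by blast
  show "y' \<subseteq> Ev E" using conf_Ev[OF y] sub by blast
  show "Con E y'" using es_facts(9)[OF E conf_Con[OF y] sub] .
qed (rule dc)

lemma lt_Le: "lt E a b \<Longrightarrow> Le E a b" by (simp add: lt_def)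

lemma down_card_le:
  assumes E: "is_es E" and le: "Le E a b" shows "card (down E a) \<le> card (down E b)"
proof -
  have bE: "b \<in> Ev E" using es_facts(1)[OF E le] by blast
  have "down E a \<subseteq> down E b" using es_facts(4)[OF E _ le] by (auto simp: down_def)
  then show ?thesis using es_facts(5)[OF E bE] by (simp add: card_mono)
qed

lemma down_card_lt:
  assumes E: "is_es E" and lt: "lt E a b" shows "card (down E a) < card (down E b)"
proof -
  have le: "Le E a b" and ne: "a \<noteq> b" using lt by (auto simp: lt_def)
  have bE: "b \<in> Ev E" using es_facts(1)[OF E le] by blast
  have "down E a \<subseteq> down E b" using es_facts(4)[OF E _ le] by (auto simp: down_def)
  moreover have "b \<in> down E b" using es_facts(2)[OF E bE] by (simp add: down_def)
  moreover have "b \<notin> down E a" using es_facts(3)[OF E le] ne by (auto simp: down_def)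
  ultimately have "down E a \<subset> down E b" by blast
  then show ?thesis using es_facts(5)[OF E bE] by (simp add: psubset_card_mono)
qed

lemma imm_ex:
  assumes E: "is_es E" and e: "e \<in> Ev E" and nm: "\<not> minimal E e"
  shows "\<exists>e'. imm E e' e"
proof -
  define L where "L = {e'. lt E e' e}"
  have "L \<subseteq> down E e" unfolding L_def down_def by (auto simp: lt_def)
  then have fL: "finite L" using es_facts(5)[OF E e] finite_subset by blast
  have "L \<noteq> {}" using nm e unfolding L_def minimal_def lt_def by auto
  define M where "M = Max ((\<lambda>e. card (down E e)) ` L)"
  have "M \<in> (\<lambda>e. card (down E e)) ` L" unfolding M_def using fL \<open>L \<noteq> {}\<close> by (intro Max_in) auto
  then obtain e' where e': "e' \<in> L" "card (down E e') = M" by blast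
  have mx: "\<forall>c\<in>L. card (down E c) \<le> M" unfolding M_def using fL by auto
  have "imm E e' e"
    unfolding imm_def
  proof (intro conjI notI)
    show "lt E e' e" using e' unfolding L_def by simp
    assume "\<exists>c. lt E e' c \<and> lt E c e"
    then obtain c where c: "lt E e' c" "lt E c e" by blast
    have "c \<in> L" using c unfolding L_def by simp
    then have "card (down E c) \<le> M" using mx by blast
    moreover have "card (down E e') < card (down E c)" using down_card_lt[OF E c(1)] .
    ultimately show False using e' by simp
  qed
  then show ?thesis by blast
qed

locale setting =
  fixes S :: "'s essp" and T :: "'t essp"
    and A :: "'a tcg" and B :: "'b tcg" and C :: "'c tcg"
    and \<sigma> :: "'s \<Rightarrow> 'a + 'b" and \<tau> :: "'t \<Rightarrow> 'b + 'c"
  assumes tA: "is_tcg A" and tB: "is_tcg B" and tC: "is_tcg C"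
    and nA: "negative A" and nB: "negative B" and nC: "negative C"
    and sS: "sim_strategy S (par (dual A) B) \<sigma>" and sT: "sim_strategy T (par (dual B) C) \<tau>"
    and nS: "negative S" and nT: "negative T"
    and stS: "single_threaded S" and stT: "single_threaded T"
begin

abbreviation "X \<equiv> par S C"
abbreviation "Y \<equiv> par A T"
abbreviation "DA \<equiv> par (dual A) B"
abbreviation "DB \<equiv> par (dual B) C"
abbreviation "f \<equiv> lift_l \<sigma>"
abbreviation "g \<equiv> lift_r \<tau>"
abbreviation "rS \<equiv> root S"
abbreviation "rT \<equiv> root T"

lemma esS: "is_es S" using sS unfolding sim_strategy_def is_essp_def by blast
lemma esT: "is_es T" using sT unfolding sim_strategy_def is_essp_def by blast
lemma esA: "is_es A" using tA unfolding is_tcg_def is_essp_def by blast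
lemma esB: "is_es B" using tB unfolding is_tcg_def is_essp_def by blast
lemma esC: "is_es C" using tC unfolding is_tcg_def is_essp_def by blast
lemma mapS: "es_map S DA \<sigma>" using sS unfolding sim_strategy_def essp_map_def by blast
lemma mapT: "es_map T DB \<tau>" using sT unfolding sim_strategy_def essp_map_def by blast
lemma polS: "s \<in> Ev S \<Longrightarrow> pol DA (\<sigma> s) = pol S s" using sS unfolding sim_strategy_def essp_map_def by blast
lemma polT: "t \<in> Ev T \<Longrightarrow> pol DB (\<tau> t) = pol T t" using sT unfolding sim_strategy_def essp_map_def by blast
lemma courtS: "courteous S DA \<sigma>" using sS unfolding sim_strategy_def by blast
lemma courtT: "courteous T DB \<tau>" using sT unfolding sim_strategy_def by blast

lemma mapS_conf: "y \<in> conf S \<Longrightarrow> \<sigma> ` y \<in> conf DA \<and> inj_on \<sigma> y" using mapS unfolding es_map_def by blast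
lemma mapT_conf: "y \<in> conf T \<Longrightarrow> \<tau> ` y \<in> conf DB \<and> inj_on \<tau> y" using mapT unfolding es_map_def by blast
lemma mapS_Ev: "s \<in> Ev S \<Longrightarrow> \<sigma> s \<in> Ev DA" using mapS unfolding es_map_def by blast
lemma mapT_Ev: "t \<in> Ev T \<Longrightarrow> \<tau> t \<in> Ev DB" using mapT unfolding es_map_def by blast

lemma f_Inl: "f (Inl s) = (case \<sigma> s of Inl a \<Rightarrow> Inl a | Inr b \<Rightarrow> Inr (Inl b))" by (simp add: lift_l_def)
lemma f_Inr: "f (Inr c) = Inr (Inr c)" by (simp add: lift_l_def)
lemma g_Inl: "g (Inl a) = Inl a" by (simp add: lift_r_def)
lemma g_Inr: "g (Inr t) = Inr (\<tau> t)" by (simp add: lift_r_def)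

lemma match_Inr_c: "f (Inr c) = g q \<Longrightarrow> \<exists>t. q = Inr t \<and> \<tau> t = Inr c"
  by (cases q) (auto simp: lift_l_def lift_r_def)
lemma match_Inl_a: "f p = g (Inl a) \<Longrightarrow> \<exists>s. p = Inl s \<and> \<sigma> s = Inl a"
  by (cases p) (auto simp: lift_l_def lift_r_def split: sum.splits)
lemma match_s_b: "f (Inl s) = g q \<Longrightarrow> \<sigma> s = Inr b \<Longrightarrow> \<exists>t. q = Inr t \<and> \<tau> t = Inl b"
  by (cases q) (auto simp: lift_l_def lift_r_def)
lemma match_s_a: "f (Inl s) = g q \<Longrightarrow> \<sigma> s = Inl a \<Longrightarrow> q = Inl a"
  by (cases q) (auto simp: lift_l_def lift_r_def)
lemma match_t_b: "f p = g (Inr t) \<Longrightarrow> \<tau> t = Inl b \<Longrightarrow> \<exists>s. p = Inl s \<and> \<sigma> s = Inr b"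
  by (cases p) (auto simp: lift_l_def lift_r_def split: sum.splits)
lemma match_t_c: "f p = g (Inr t) \<Longrightarrow> \<tau> t = Inr c \<Longrightarrow> p = Inr c"
  by (cases p) (auto simp: lift_l_def lift_r_def split: sum.splits)
lemma match_s_t: "f (Inl s) = g (Inr t) \<Longrightarrow> \<exists>b. \<sigma> s = Inr b \<and> \<tau> t = Inl b"
  by (auto simp: lift_l_def lift_r_def split: sum.splits)

definition good :: "(('s + 'c) \<times> ('a + 't)) set \<Rightarrow> bool" where
  "good W \<longleftrightarrow> fst ` W \<in> conf X \<and> snd ` W \<in> conf Y \<and>
     (\<forall>p q q'. (p,q) \<in> W \<and> (p,q') \<in> W \<longrightarrow> q = q') \<and>
     (\<forall>p p' q. (p,q) \<in> W \<and> (p',q) \<in> W \<longrightarrow> p = p') \<and>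
     (\<forall>(p,q)\<in>W. f p = g q)"

lemma secured_iff: "secured_bij X Y f g W \<longleftrightarrow> good W \<and> acyclic (sec_rel X Y W)"
  unfolding secured_bij_def good_def by blast

lemma goodD:
  assumes "good W"
  shows "fst ` W \<in> conf X" "snd ` W \<in> conf Y"
    "(p,q) \<in> W \<Longrightarrow> (p,q') \<in> W \<Longrightarrow> q = q'"
    "(p,q) \<in> W \<Longrightarrow> (p',q) \<in> W \<Longrightarrow> p = p'"
    "(p,q) \<in> W \<Longrightarrow> f p = g q"
  using assms unfolding good_def by blast+

definition yS :: "(('s + 'c) \<times> ('a + 't)) set \<Rightarrow> 's set" where "yS W = {s. \<exists>q. (Inl s, q) \<in> W}"
definition yT :: "(('s + 'c) \<times> ('a + 't)) set \<Rightarrow> 't set" where "yT W = {t. \<exists>p. (p, Inr t) \<in> W}"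

lemma yS_eq: "yS W = Inl -` fst ` W" unfolding yS_def by force
lemma yT_eq: "yT W = Inr -` snd ` W" unfolding yT_def by force

lemma good_yS: "good W \<Longrightarrow> yS W \<in> conf S"
  unfolding yS_eq by (rule par_conf_l[OF goodD(1)])
lemma good_yT: "good W \<Longrightarrow> yT W \<in> conf T"
  unfolding yT_eq by (rule par_conf_r[OF goodD(2)])

lemma yS_down: "good W \<Longrightarrow> s \<in> yS W \<Longrightarrow> Le S s' s \<Longrightarrow> s' \<in> yS W"
  by (rule conf_down[OF good_yS])
lemma yT_down: "good W \<Longrightarrow> t \<in> yT W \<Longrightarrow> Le T t' t \<Longrightarrow> t' \<in> yT W"
  by (rule conf_down[OF good_yT])
lemma yS_Ev: "good W \<Longrightarrow> s \<in> yS W \<Longrightarrow> s \<in> Ev S"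
  using conf_Ev[OF good_yS] by blast
lemma yT_Ev: "good W \<Longrightarrow> t \<in> yT W \<Longrightarrow> t \<in> Ev T"
  using conf_Ev[OF good_yT] by blast

lemma injS: "good W \<Longrightarrow> (Inl s, q) \<in> W \<Longrightarrow> (Inl s', q') \<in> W \<Longrightarrow> \<sigma> s = \<sigma> s' \<Longrightarrow> s = s'"
proof -
  assume gW: "good W" and a: "(Inl s, q) \<in> W" "(Inl s', q') \<in> W" "\<sigma> s = \<sigma> s'"
  have "s \<in> yS W" "s' \<in> yS W" using a unfolding yS_def by blast+
  moreover have "inj_on \<sigma> (yS W)" using mapS_conf[OF good_yS[OF gW]] by blast
  ultimately show "s = s'" using a(3) by (simp add: inj_on_def)
qed

lemma injT: "good W \<Longrightarrow> (p, Inr t) \<in> W \<Longrightarrow> (p', Inr t') \<in> W \<Longrightarrow> \<tau> t = \<tau> t' \<Longrightarrow> t = t'"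
proof -
  assume gW: "good W" and a: "(p, Inr t) \<in> W" "(p', Inr t') \<in> W" "\<tau> t = \<tau> t'"
  have "t \<in> yT W" "t' \<in> yT W" using a unfolding yT_def by blast+
  moreover have "inj_on \<tau> (yT W)" using mapT_conf[OF good_yT[OF gW]] by blast
  ultimately show "t = t'" using a(3) by (simp add: inj_on_def)
qed

lemma img_down_S:
  assumes s: "s \<in> Ev S" and le: "Le DA e (\<sigma> s)"
  shows "\<exists>s'. Le S s' s \<and> \<sigma> s' = e"
proof -
  have c1: "\<sigma> ` down S s \<in> conf DA" using mapS_conf[OF down_conf[OF esS s]] by blast
  have c2: "\<sigma> s \<in> \<sigma> ` down S s" using es_facts(2)[OF esS s] by (auto simp: down_def)
  have "e \<in> \<sigma> ` down S s" by (rule conf_down[OF c1 c2 le])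
  then show ?thesis by (auto simp: down_def)
qed

lemma img_down_T:
  assumes t: "t \<in> Ev T" and le: "Le DB e (\<tau> t)"
  shows "\<exists>t'. Le T t' t \<and> \<tau> t' = e"
proof -
  have c1: "\<tau> ` down T t \<in> conf DB" using mapT_conf[OF down_conf[OF esT t]] by blast
  have c2: "\<tau> t \<in> \<tau> ` down T t" using es_facts(2)[OF esT t] by (auto simp: down_def)
  have "e \<in> \<tau> ` down T t" by (rule conf_down[OF c1 c2 le])
  then show ?thesis by (auto simp: down_def)
qed

lemma min_img_S:
  assumes m: "minimal S m" shows "\<exists>b. \<sigma> m = Inr b"
proof (cases "\<sigma> m")
  case (Inl a)
  have mE: "m \<in> Ev S" using m unfolding minimal_def by blast
  have c: "\<sigma> ` {m} \<in> conf DA" using mapS_conf[OF minimal_conf[OF esS m]] by blast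
  have "\<sigma> m \<in> Ev DA" using mapS_Ev[OF mE] .
  then have aE: "a \<in> Ev A" using Inl by (auto simp: par_simps dual_simps)
  have "minimal A a" unfolding minimal_def
  proof (intro conjI allI impI)
    show "a \<in> Ev A" by (rule aE)
    fix a' assume "Le A a' a"
    then have "Le DA (Inl a') (\<sigma> m)" using Inl by (simp add: par_simps dual_simps)
    then have "Inl a' \<in> \<sigma> ` {m}" using conf_down[OF c, of "\<sigma> m" "Inl a'"] by simp
    then show "a' = a" using Inl by simp
  qed
  then have "\<not> pol A a" using nA unfolding negative_def by blast
  then have "pol DA (\<sigma> m)" using Inl by (simp add: par_simps dual_simps)
  moreover have "\<not> pol S m" using nS m unfolding negative_def by blast
  ultimately show ?thesis using polS[OF mE] by simp
qed simp

lemma min_img_T: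
  assumes m: "minimal T m" shows "\<exists>c. \<tau> m = Inr c"
proof (cases "\<tau> m")
  case (Inl b)
  have mE: "m \<in> Ev T" using m unfolding minimal_def by blast
  have c: "\<tau> ` {m} \<in> conf DB" using mapT_conf[OF minimal_conf[OF esT m]] by blast
  have "\<tau> m \<in> Ev DB" using mapT_Ev[OF mE] .
  then have bE: "b \<in> Ev B" using Inl by (auto simp: par_simps dual_simps)
  have "minimal B b" unfolding minimal_def
  proof (intro conjI allI impI)
    show "b \<in> Ev B" by (rule bE)
    fix b' assume "Le B b' b"
    then have "Le DB (Inl b') (\<tau> m)" using Inl by (simp add: par_simps dual_simps)
    then have "Inl b' \<in> \<tau> ` {m}" using conf_down[OF c, of "\<tau> m" "Inl b'"] by simp
    then show "b' = b" using Inl by simp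
  qed
  then have "\<not> pol B b" using nB unfolding negative_def by blast
  then have "pol DB (\<tau> m)" using Inl by (simp add: par_simps dual_simps)
  moreover have "\<not> pol T m" using nT m unfolding negative_def by blast
  ultimately show ?thesis using polT[OF mE] by simp
qed simp

end


context setting begin

definition partner :: "(('s + 'c) \<times> ('a + 't)) set \<Rightarrow> 's \<Rightarrow> 't" where
  "partner W s = (THE t. (Inl s, Inr t) \<in> W)"

lemma partner_eq:
  assumes gW: "good W" and p: "(Inl s, Inr t) \<in> W"
  shows "partner W s = t"
  unfolding partner_def
proof (rule the_equality)
  show "(Inl s, Inr t) \<in> W" by (rule p)
  fix t' assume "(Inl s, Inr t') \<in> W"
  from goodD(3)[OF gW this p] show "t' = t" by simp
qed

lemma partner_ex:
  assumes gW: "good W" and sy: "s \<in> yS W" and sb: "\<sigma> s = Inr b"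
  shows "(Inl s, Inr (partner W s)) \<in> W \<and> \<tau> (partner W s) = Inl b"
proof -
  obtain q where q: "(Inl s, q) \<in> W" using sy unfolding yS_def by blast
  obtain t where t: "q = Inr t" "\<tau> t = Inl b" using match_s_b[OF goodD(5)[OF gW q] sb] by blast
  have "partner W s = t" using partner_eq[OF gW] q t by simp
  then show ?thesis using q t by simp
qed

definition thrS :: "(('s + 'c) \<times> ('a + 't)) set \<Rightarrow> 's \<Rightarrow> 't" where
  "thrS W s = rT (partner W (rS s))"

definition thr :: "(('s + 'c) \<times> ('a + 't)) set \<Rightarrow> (('s + 'c) \<times> ('a + 't)) \<Rightarrow> 't" where
  "thr W v = (case snd v of Inr t \<Rightarrow> rT t | Inl a \<Rightarrow> thrS W (projl (fst v)))"

lemma rootS_in: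
  assumes gW: "good W" and sy: "s \<in> yS W"
  shows "rS s \<in> yS W" "minimal S (rS s)" "Le S (rS s) s"
proof -
  have sE: "s \<in> Ev S" using yS_Ev[OF gW sy] .
  show "Le S (rS s) s" "minimal S (rS s)" using root_props[OF stS sE] by blast+
  then show "rS s \<in> yS W" using yS_down[OF gW sy] by blast
qed

lemma K:
  assumes gW: "good W"
  shows "(Inl s, Inr t) \<in> W \<Longrightarrow> thrS W s = rT t"
proof (induction "card (down S s) + card (down T t)" arbitrary: s t rule: less_induct)
  case less
  note st = less.prems
  have sy: "s \<in> yS W" using st unfolding yS_def by blast
  have ty: "t \<in> yT W" using st unfolding yT_def by blast
  have sE: "s \<in> Ev S" using yS_Ev[OF gW sy] .
  have tE: "t \<in> Ev T" using yT_Ev[OF gW ty] .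
  obtain b where sb: "\<sigma> s = Inr b" and tb: "\<tau> t = Inl b" using match_s_t[OF goodD(5)[OF gW st]] by blast
  have ps: "pol S s = pol B b" using polS[OF sE] sb by (simp add: par_simps)
  have pt: "pol T t = (\<not> pol B b)" using polT[OF tE] tb by (simp add: par_simps dual_simps)
  show ?case
  proof (cases "pol B b")
    case True
    then have ptf: "\<not> pol T t" using pt by simp
    have nmt: "\<not> minimal T t"
    proof
      assume "minimal T t"
      then obtain c where "\<tau> t = Inr c" using min_img_T by blast
      then show False using tb by simp
    qed
    obtain t' where it: "imm T t' t" using imm_ex[OF esT tE nmt] by blast
    have "imm DB (\<tau> t') (\<tau> t)" using courtT it ptf unfolding courteous_def by blast
    then have ltB: "lt DB (\<tau> t') (Inl b)" using tb by (simp add: imm_def)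
    obtain b' where tb': "\<tau> t' = Inl b'" and lebb: "Le B b' b"
      using Le_par_cases[OF lt_Le[OF ltB]] by (auto simp: dual_simps)
    have tt': "Le T t' t" using it by (simp add: imm_def lt_def)
    have t'y: "t' \<in> yT W" using yT_down[OF gW ty tt'] .
    then obtain p' where p': "(p', Inr t') \<in> W" unfolding yT_def by blast
    obtain s'' where s'': "p' = Inl s''" "\<sigma> s'' = Inr b'" using match_t_b[OF goodD(5)[OF gW p'] tb'] by blast
    have "Le DA (Inr b') (\<sigma> s)" using sb lebb by (simp add: par_simps)
    then obtain s' where ss': "Le S s' s" "\<sigma> s' = Inr b'" using img_down_S[OF sE] by blast
    have s'y: "s' \<in> yS W" using yS_down[OF gW sy ss'(1)] .
    then obtain q' where q': "(Inl s', q') \<in> W" unfolding yS_def by blast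
    have p'': "(Inl s'', Inr t') \<in> W" using p' s''(1) by simp
    have "s' = s''" using injS[OF gW q' p''] ss'(2) s''(2) by simp
    then have pw: "(Inl s', Inr t') \<in> W" using p'' by simp
    have "card (down S s') \<le> card (down S s)" using down_card_le[OF esS ss'(1)] .
    moreover have "card (down T t') < card (down T t)" using down_card_lt[OF esT] it by (simp add: imm_def)
    ultimately have m: "card (down S s') + card (down T t') < card (down S s) + card (down T t)" by simp
    have "thrS W s' = rT t'" by (rule less.hyps[OF m pw])
    moreover have "rS s' = rS s" using root_mono[OF esS stS ss'(1)] .
    moreover have "rT t' = rT t" using root_mono[OF esT stT tt'] .
    ultimately show ?thesis unfolding thrS_def by simp
  next
    case False
    then have psf: "\<not> pol S s" using ps by simp
    show ?thesis
    proof (cases "minimal S s")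
      case True
      then have "rS s = s" using root_min[OF esS stS] by blast
      then show ?thesis unfolding thrS_def using partner_eq[OF gW st] by simp
    next
      case nm: False
      obtain s1 where is1: "imm S s1 s" using imm_ex[OF esS sE nm] by blast
      have "imm DA (\<sigma> s1) (\<sigma> s)" using courtS is1 psf unfolding courteous_def by blast
      then have ltA: "lt DA (\<sigma> s1) (Inr b)" using sb by (simp add: imm_def)
      obtain b1 where sb1: "\<sigma> s1 = Inr b1" and leb: "Le B b1 b"
        using Le_par_cases[OF lt_Le[OF ltA]] by auto
      have ss1: "Le S s1 s" using is1 by (simp add: imm_def lt_def)
      have s1y: "s1 \<in> yS W" using yS_down[OF gW sy ss1] .
      then obtain q1 where q1: "(Inl s1, q1) \<in> W" unfolding yS_def by blast
      obtain t1'' where t1'': "q1 = Inr t1''" "\<tau> t1'' = Inl b1" using match_s_b[OF goodD(5)[OF gW q1] sb1] by blast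
      have "Le DB (Inl b1) (\<tau> t)" using tb leb by (simp add: par_simps dual_simps)
      then obtain t1 where tt1: "Le T t1 t" "\<tau> t1 = Inl b1" using img_down_T[OF tE] by blast
      have "t1 \<in> yT W" using yT_down[OF gW ty tt1(1)] .
      then obtain p1 where p1: "(p1, Inr t1) \<in> W" unfolding yT_def by blast
      have q1': "(Inl s1, Inr t1'') \<in> W" using q1 t1''(1) by simp
      have "t1'' = t1" using injT[OF gW q1' p1] t1''(2) tt1(2) by simp
      then have pw: "(Inl s1, Inr t1) \<in> W" using q1' by simp
      have "card (down S s1) < card (down S s)" using down_card_lt[OF esS] is1 by (simp add: imm_def)
      moreover have "card (down T t1) \<le> card (down T t)" using down_card_le[OF esT tt1(1)] .
      ultimately have m: "card (down S s1) + card (down T t1) < card (down S s) + card (down T t)" by simp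
      have "thrS W s1 = rT t1" by (rule less.hyps[OF m pw])
      moreover have "rS s1 = rS s" using root_mono[OF esS stS ss1] .
      moreover have "rT t1 = rT t" using root_mono[OF esT stT tt1(1)] .
      ultimately show ?thesis unfolding thrS_def by simp
    qed
  qed
qed

lemma thr_Inr: "thr W (p, Inr t) = rT t" by (simp add: thr_def)

lemma thr_Inl:
  assumes gW: "good W" and v: "(Inl s, q) \<in> W"
  shows "thr W (Inl s, q) = thrS W s"
proof (cases q)
  case (Inl a) then show ?thesis by (simp add: thr_def)
next
  case (Inr t) then show ?thesis using K[OF gW] v by (simp add: thr_def)
qed

lemma thr_edge:
  assumes gW: "good W" and v: "(p,q) \<in> W" and v': "(p',q') \<in> W"
    and le: "Le X p p' \<or> Le Y q q'"
  shows "thr W (p,q) = thr W (p',q')"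
  using le
proof
  assume "Le X p p'"
  from Le_par_cases[OF this] show ?thesis
  proof
    assume "\<exists>a b. p = Inl a \<and> p' = Inl b \<and> Le S a b"
    then obtain s s' where ss: "p = Inl s" "p' = Inl s'" "Le S s s'" by blast
    have "thr W (p,q) = thrS W s" using thr_Inl[OF gW] v ss by simp
    moreover have "thr W (p',q') = thrS W s'" using thr_Inl[OF gW] v' ss by simp
    moreover have "rS s = rS s'" using root_mono[OF esS stS ss(3)] .
    ultimately show ?thesis unfolding thrS_def by simp
  next
    assume "\<exists>c d. p = Inr c \<and> p' = Inr d \<and> Le C c d"
    then obtain c c' where cc: "p = Inr c" "p' = Inr c'" "Le C c c'" by blast
    obtain t where t: "q = Inr t" "\<tau> t = Inr c" using match_Inr_c goodD(5)[OF gW v] cc by metis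
    obtain t' where t': "q' = Inr t'" "\<tau> t' = Inr c'" using match_Inr_c goodD(5)[OF gW v'] cc by metis
    have t'y: "t' \<in> yT W" using v' t' unfolding yT_def by blast
    have t'E: "t' \<in> Ev T" using yT_Ev[OF gW t'y] .
    have "Le DB (Inr c) (\<tau> t')" using t' cc by (simp add: par_simps)
    then obtain t'' where t'': "Le T t'' t'" "\<tau> t'' = Inr c" using img_down_T[OF t'E] by blast
    have "t'' \<in> yT W" using yT_down[OF gW t'y t''(1)] .
    then obtain p'' where p'': "(p'', Inr t'') \<in> W" unfolding yT_def by blast
    have "p'' = Inr c" using match_t_c[OF goodD(5)[OF gW p''] t''(2)] .
    then have w2: "(Inr c, Inr t'') \<in> W" using p'' by simp
    have w1: "(Inr c, Inr t) \<in> W" using v cc t by simp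
    have "t = t''" using goodD(3)[OF gW w1 w2] by simp
    then have "Le T t t'" using t'' by simp
    then have "rT t = rT t'" using root_mono[OF esT stT] by blast
    then show ?thesis using t t' by (simp add: thr_Inr)
  qed
next
  assume "Le Y q q'"
  from Le_par_cases[OF this] show ?thesis
  proof
    assume "\<exists>a b. q = Inl a \<and> q' = Inl b \<and> Le A a b"
    then obtain a a' where aa: "q = Inl a" "q' = Inl a'" "Le A a a'" by blast
    obtain s where s: "p = Inl s" "\<sigma> s = Inl a" using match_Inl_a goodD(5)[OF gW v] aa by metis
    obtain s' where s': "p' = Inl s'" "\<sigma> s' = Inl a'" using match_Inl_a goodD(5)[OF gW v'] aa by metis
    have s'y: "s' \<in> yS W" using v' s' unfolding yS_def by blast
    have s'E: "s' \<in> Ev S" using yS_Ev[OF gW s'y] .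
    have "Le DA (Inl a) (\<sigma> s')" using s' aa by (simp add: par_simps dual_simps)
    then obtain s'' where s'': "Le S s'' s'" "\<sigma> s'' = Inl a" using img_down_S[OF s'E] by blast
    have "s'' \<in> yS W" using yS_down[OF gW s'y s''(1)] .
    then obtain q'' where q'': "(Inl s'', q'') \<in> W" unfolding yS_def by blast
    have "q'' = Inl a" using match_s_a[OF goodD(5)[OF gW q''] s''(2)] .
    then have w2: "(Inl s'', Inl a) \<in> W" using q'' by simp
    have w1: "(Inl s, Inl a) \<in> W" using v aa s by simp
    have "s = s''" using goodD(4)[OF gW w1 w2] by simp
    then have "Le S s s'" using s'' by simp
    then have "rS s = rS s'" using root_mono[OF esS stS] by blast
    moreover have "thr W (p,q) = thrS W s" using thr_Inl[OF gW] v s by simp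
    moreover have "thr W (p',q') = thrS W s'" using thr_Inl[OF gW] v' s' by simp
    ultimately show ?thesis unfolding thrS_def by simp
  next
    assume "\<exists>c d. q = Inr c \<and> q' = Inr d \<and> Le T c d"
    then obtain t t' where tt: "q = Inr t" "q' = Inr t'" "Le T t t'" by blast
    have "rT t = rT t'" using root_mono[OF esT stT tt(3)] .
    then show ?thesis using tt by (simp add: thr_Inr)
  qed
qed

lemma thr_rtrancl:
  assumes gW: "good W" and r: "(v, w) \<in> (sec_rel X Y W)\<^sup>*"
  shows "thr W v = thr W w"
  using r
proof (induction rule: rtrancl_induct)
  case base then show ?case by simp
next
  case (step y z)
  from step.hyps(2) have yz: "y \<in> W" "z \<in> W" "lt X (fst y) (fst z) \<or> lt Y (snd y) (snd z)"
    unfolding sec_rel_def by auto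
  have "thr W y = thr W z"
    using thr_edge[OF gW, of "fst y" "snd y" "fst z" "snd z"] yz lt_Le by (metis prod.collapse)
  then show ?case using step.IH by simp
qed

lemma thr_sub:
  assumes gW: "good W" and gW': "good W'" and sub: "W \<subseteq> W'" and v: "v \<in> W"
  shows "thr W v = thr W' v"
proof (cases "snd v")
  case (Inr t) then show ?thesis by (simp add: thr_def)
next
  case (Inl a)
  obtain p where vp: "v = (p, Inl a)" using Inl by (metis prod.collapse)
  have vv: "(p, Inl a) \<in> W" using v vp by simp
  obtain s where s: "p = Inl s" "\<sigma> s = Inl a" using match_Inl_a[OF goodD(5)[OF gW vv]] by blast
  have sy: "s \<in> yS W" using v vp s unfolding yS_def by blast
  obtain b0 where b0: "\<sigma> (rS s) = Inr b0" using min_img_S[OF rootS_in(2)[OF gW sy]] by blast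
  have "(Inl (rS s), Inr (partner W (rS s))) \<in> W" using partner_ex[OF gW rootS_in(1)[OF gW sy] b0] by blast
  then have "partner W' (rS s) = partner W (rS s)" using partner_eq[OF gW'] sub by blast
  then show ?thesis using vp s by (simp add: thr_def thrS_def)
qed

lemma thr_val:
  assumes gW: "good W" and v: "v \<in> W"
  shows "\<exists>t\<in>yT W. thr W v = rT t"
proof (cases "snd v")
  case (Inr t)
  have "(fst v, Inr t) \<in> W" using v Inr by (metis prod.collapse)
  then have "t \<in> yT W" unfolding yT_def by blast
  then show ?thesis using Inr by (auto simp: thr_def)
next
  case (Inl a)
  obtain p where vp: "v = (p, Inl a)" using Inl by (metis prod.collapse)
  have vv: "(p, Inl a) \<in> W" using v vp by simp
  obtain s where s: "p = Inl s" "\<sigma> s = Inl a" using match_Inl_a[OF goodD(5)[OF gW vv]] by blast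
  have sy: "s \<in> yS W" using v vp s unfolding yS_def by blast
  obtain b0 where b0: "\<sigma> (rS s) = Inr b0" using min_img_S[OF rootS_in(2)[OF gW sy]] by blast
  have "(Inl (rS s), Inr (partner W (rS s))) \<in> W" using partner_ex[OF gW rootS_in(1)[OF gW sy] b0] by blast
  then have "partner W (rS s) \<in> yT W" unfolding yT_def by blast
  then show ?thesis using vp s by (auto simp: thr_def thrS_def)
qed

lemma root_pair:
  assumes gW: "good W" and ty: "t \<in> yT W"
  shows "minimal T (rT t) \<and> (\<exists>c. (Inr c, Inr (rT t)) \<in> W \<and> \<tau> (rT t) = Inr c)"
proof -
  have tE: "t \<in> Ev T" using yT_Ev[OF gW ty] .
  have m: "minimal T (rT t)" and le: "Le T (rT t) t" using root_props[OF stT tE] by blast+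
  have "rT t \<in> yT W" using yT_down[OF gW ty le] .
  then obtain p where p: "(p, Inr (rT t)) \<in> W" unfolding yT_def by blast
  obtain c where c: "\<tau> (rT t) = Inr c" using min_img_T[OF m] by blast
  have "p = Inr c" using match_t_c[OF goodD(5)[OF gW p] c] .
  then show ?thesis using m p c by blast
qed

abbreviation "P \<equiv> pullback X Y f g"

lemma Ev_P: "\<theta> \<in> Ev P \<longleftrightarrow> secured_bij X Y f g \<theta> \<and> (\<exists>u. is_top X Y \<theta> u)"
  by (simp add: pullback_def Let_def)
lemma Le_P: "Le P a b \<longleftrightarrow> a \<in> Ev P \<and> b \<in> Ev P \<and> a \<subseteq> b"
  by (simp add: pullback_def Let_def)
lemma Con_P: "Con P xs \<longleftrightarrow> finite xs \<and> xs \<subseteq> Ev P \<and> secured_bij X Y f g (\<Union>xs)"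
  by (simp add: pullback_def Let_def)

lemma EvP_good: "\<theta> \<in> Ev P \<Longrightarrow> good \<theta>" using Ev_P secured_iff by blast

lemma top_is:
  assumes th: "\<theta> \<in> Ev P"
  shows "is_top X Y \<theta> (top X Y \<theta>)"
proof -
  obtain u where u: "is_top X Y \<theta> u" using th Ev_P by blast
  have ac: "acyclic (sec_rel X Y \<theta>)" using th Ev_P secured_iff by blast
  have "top X Y \<theta> = u" unfolding top_def
  proof (rule the_equality)
    show "is_top X Y \<theta> u" by (rule u)
    fix u' assume u': "is_top X Y \<theta> u'"
    have r1: "(u', u) \<in> (sec_rel X Y \<theta>)\<^sup>*" using u u' unfolding is_top_def by blast
    have r2: "(u, u') \<in> (sec_rel X Y \<theta>)\<^sup>*" using u u' unfolding is_top_def by blast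
    show "u' = u"
    proof (rule ccontr)
      assume "u' \<noteq> u"
      then have "(u', u) \<in> (sec_rel X Y \<theta>)\<^sup>+" using r1 by (meson rtranclD)
      then have "(u', u') \<in> (sec_rel X Y \<theta>)\<^sup>+" using r2 by (rule trancl_rtrancl_trancl)
      then show False using ac unfolding acyclic_def by blast
    qed
  qed
  then show ?thesis using u by simp
qed

lemma top_in: "\<theta> \<in> Ev P \<Longrightarrow> top X Y \<theta> \<in> \<theta>" using top_is unfolding is_top_def by blast

lemma thr_top:
  assumes th: "\<theta> \<in> Ev P" and v: "v \<in> \<theta>"
  shows "thr \<theta> v = thr \<theta> (top X Y \<theta>)"
proof -
  have "(v, top X Y \<theta>) \<in> (sec_rel X Y \<theta>)\<^sup>*" using top_is[OF th] v unfolding is_top_def by blast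
  then show ?thesis using thr_rtrancl[OF EvP_good[OF th]] by blast
qed

lemma single_ev:
  assumes m: "minimal T t0" and c: "\<tau> t0 = Inr c"
  shows "{(Inr c, Inr t0)} \<in> Ev P" "top X Y {(Inr c, Inr t0)} = (Inr c, Inr t0)"
proof -
  define u :: "('s + 'c) \<times> ('a + 't)" where "u = (Inr c, Inr t0)"
  have t0E: "t0 \<in> Ev T" using m unfolding minimal_def by blast
  have "\<tau> t0 \<in> Ev DB" using mapT_Ev[OF t0E] .
  then have cE: "c \<in> Ev C" using c by (auto simp: par_simps)
  have c1: "{Inr c} \<in> conf X"
  proof (rule confI)
    show "finite {Inr c}" by simp
    show "{Inr c} \<subseteq> Ev X" using cE by (simp add: par_simps)
    have "Inl -` {Inr c :: 's + 'c} = {}" "Inr -` {Inr c :: 's + 'c} = {c}" by auto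
    then show "Con X {Inr c}" using cE es_facts(7)[OF esS] es_facts(8)[OF esC cE] by (simp add: par_simps)
    fix a b assume b: "b \<in> {Inr c}" and le: "Le X a b"
    from Le_par_cases[OF le] b obtain c' where c': "a = Inr c'" "Le C c' c" by auto
    have "Le DB (Inr c') (\<tau> t0)" using c c' by (simp add: par_simps)
    then obtain t' where t': "Le T t' t0" "\<tau> t' = Inr c'" using img_down_T[OF t0E] by blast
    have "t' = t0" using m t'(1) unfolding minimal_def by blast
    then show "a \<in> {Inr c}" using t' c c' by simp
  qed
  have c2: "{Inr t0} \<in> conf Y"
  proof (rule confI)
    show "finite {Inr t0}" by simp
    show "{Inr t0} \<subseteq> Ev Y" using t0E by (simp add: par_simps)
    have "Inl -` {Inr t0 :: 'a + 't} = {}" "Inr -` {Inr t0 :: 'a + 't} = {t0}" by auto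
    then show "Con Y {Inr t0}" using t0E es_facts(7)[OF esA] es_facts(8)[OF esT t0E] by (simp add: par_simps)
    fix a b assume b: "b \<in> {Inr t0}" and le: "Le Y a b"
    from Le_par_cases[OF le] b obtain t' where t': "a = Inr t'" "Le T t' t0" by auto
    have "t' = t0" using m t'(2) unfolding minimal_def by blast
    then show "a \<in> {Inr t0}" using t' by simp
  qed
  have g: "good {u}" unfolding good_def u_def using c1 c2 c by (simp add: f_Inr g_Inr)
  have sr: "sec_rel X Y {u} = {}" unfolding sec_rel_def lt_def by auto
  have tp: "is_top X Y {u} u" unfolding is_top_def sr by simp
  have "secured_bij X Y f g {u}" unfolding secured_iff sr using g by (simp add: acyclic_def)
  then have ev: "{u} \<in> Ev P" using tp Ev_P by blast
  then show "{(Inr c, Inr t0)} \<in> Ev P" unfolding u_def .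
  have "top X Y {u} \<in> {u}" using top_in[OF ev] .
  then show "top X Y {(Inr c, Inr t0)} = (Inr c, Inr t0)" unfolding u_def by simp
qed

lemma ev_root:
  assumes th: "\<theta> \<in> Ev P"
  shows "\<exists>c. (Inr c, Inr (thr \<theta> (top X Y \<theta>))) \<in> \<theta> \<and> \<tau> (thr \<theta> (top X Y \<theta>)) = Inr c \<and> minimal T (thr \<theta> (top X Y \<theta>))"
proof -
  obtain t where t: "t \<in> yT \<theta>" "thr \<theta> (top X Y \<theta>) = rT t" using thr_val[OF EvP_good[OF th] top_in[OF th]] by blast
  show ?thesis using root_pair[OF EvP_good[OF th] t(1)] t(2) by simp
qed

end


context setting begin

abbreviation "SC \<equiv> strat_comp S T A C \<sigma> \<tau>"
abbreviation "V \<equiv> {\<theta> \<in> Ev P. \<forall>b. f (fst (top X Y \<theta>)) \<noteq> Inr (Inl b)}"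

lemma SC_simps:
  "Ev SC = V"
  "Le SC a b \<longleftrightarrow> a \<in> V \<and> b \<in> V \<and> a \<subseteq> b"
  "Con SC xs \<longleftrightarrow> xs \<subseteq> V \<and> finite xs \<and> secured_bij X Y f g (\<Union>xs)"
  "pol SC \<theta> = pol X (fst (top X Y \<theta>))"
  by (auto simp: strat_comp_def pullback_def Let_def)

lemma single_V:
  assumes m: "minimal T t0" and c: "\<tau> t0 = Inr c"
  shows "{(Inr c, Inr t0)} \<in> V"
  using single_ev[OF m c] by (simp add: f_Inr)

lemma V_root:
  assumes th: "\<theta> \<in> Ev P"
  obtains c t0 where "(Inr c, Inr t0) \<in> \<theta>" "\<tau> t0 = Inr c" "minimal T t0" "t0 = thr \<theta> (top X Y \<theta>)"
  using ev_root[OF th] by blast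

lemma min_SC:
  assumes m: "minimal SC m"
  obtains c t0 where "m = {(Inr c, Inr t0)}" "\<tau> t0 = Inr c" "minimal T t0"
proof -
  have mV: "m \<in> V" using m unfolding minimal_def SC_simps by blast
  then have mP: "m \<in> Ev P" by blast
  obtain c t0 where u: "(Inr c, Inr t0) \<in> m" "\<tau> t0 = Inr c" "minimal T t0" using V_root[OF mP] by metis
  have "{(Inr c, Inr t0)} \<in> V" using single_V[OF u(3) u(2)] .
  then have "Le SC {(Inr c, Inr t0)} m" using mV u(1) SC_simps(2) by blast
  then have "{(Inr c, Inr t0)} = m" using m unfolding minimal_def by blast
  then show ?thesis using that u by blast
qed

lemma neg_SC: "negative SC"
  unfolding negative_def
proof (intro allI impI)
  fix m assume m: "minimal SC m"
  obtain c t0 where u: "m = {(Inr c, Inr t0)}" "\<tau> t0 = Inr c" "minimal T t0" using min_SC[OF m] by blast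
  have tp: "top X Y m = (Inr c, Inr t0)" using single_ev[OF u(3) u(2)] u(1) by simp
  have t0E: "t0 \<in> Ev T" using u(3) unfolding minimal_def by blast
  have "pol C c = pol T t0" using polT[OF t0E] u(2) by (simp add: par_simps)
  moreover have "\<not> pol T t0" using nT u(3) unfolding negative_def by blast
  ultimately show "\<not> pol SC m" using tp by (simp add: SC_simps par_simps)
qed

lemma st1_SC:
  assumes aV: "a \<in> V"
  shows "\<exists>!m. m \<in> down SC a \<and> minimal SC m"
proof -
  have aP: "a \<in> Ev P" using aV by blast
  obtain c t0 where u: "(Inr c, Inr t0) \<in> a" "\<tau> t0 = Inr c" "minimal T t0" "t0 = thr a (top X Y a)"
    using V_root[OF aP] by metis
  have uV: "{(Inr c, Inr t0)} \<in> V" using single_V[OF u(3) u(2)] .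
  show ?thesis
  proof (rule ex1I)
    show "{(Inr c, Inr t0)} \<in> down SC a \<and> minimal SC {(Inr c, Inr t0)}"
    proof
      show "{(Inr c, Inr t0)} \<in> down SC a" unfolding down_def SC_simps using uV aV u(1) by blast
      show "minimal SC {(Inr c, Inr t0)}" unfolding minimal_def
      proof (intro conjI allI impI)
        show "{(Inr c, Inr t0)} \<in> Ev SC" using uV SC_simps(1) by simp
        fix b assume "Le SC b {(Inr c, Inr t0)}"
        then have b: "b \<in> V" "b \<subseteq> {(Inr c, Inr t0)}" unfolding SC_simps by blast+
        have "top X Y b \<in> b" using top_in b(1) by blast
        then have "b \<noteq> {}" by blast
        then show "b = {(Inr c, Inr t0)}" using b(2) by (metis subset_singletonD)
      qed
    qed
  next
    fix m assume mm: "m \<in> down SC a \<and> minimal SC m"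
    obtain c' t0' where u': "m = {(Inr c', Inr t0')}" "\<tau> t0' = Inr c'" "minimal T t0'"
      using min_SC mm by metis
    have "m \<subseteq> a" using mm unfolding down_def SC_simps by blast
    then have ina: "(Inr c', Inr t0') \<in> a" using u' by blast
    have "thr a (Inr c', Inr t0') = t0'" using root_min[OF esT stT u'(3)] by (simp add: thr_Inr)
    moreover have "thr a (Inr c', Inr t0') = t0" using thr_top[OF aP ina] u(4) by simp
    ultimately have "t0' = t0" by simp
    then show "m = {(Inr c, Inr t0)}" using u' u(2) by simp
  qed
qed

lemma TJ:
  assumes t: "t \<in> Ev T" and t': "t' \<in> Ev T" and eq: "\<tau> t = \<tau> t'"
  shows "rT t = rT t'"
proof (rule ccontr)
  assume ne: "rT t \<noteq> rT t'"
  have "down T t \<inter> down T t' = {}"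
  proof (rule ccontr)
    assume "down T t \<inter> down T t' \<noteq> {}"
    then obtain e where "Le T e t" "Le T e t'" unfolding down_def by blast
    then have "root T e = rT t" "root T e = rT t'" using root_mono[OF esT stT] by blast+
    then show False using ne by simp
  qed
  then have "down T t \<union> down T t' \<in> conf T" using st_join[OF esT stT down_conf[OF esT t] down_conf[OF esT t']] by blast
  then have "inj_on \<tau> (down T t \<union> down T t')" using mapT_conf by blast
  moreover have "t \<in> down T t \<union> down T t'" "t' \<in> down T t \<union> down T t'"
    using es_facts(2)[OF esT t] es_facts(2)[OF esT t'] unfolding down_def by blast+
  ultimately have "t = t'" using eq unfolding inj_on_def by blast
  then show False using ne by simp
qed

lemma SJ:
  assumes s: "s \<in> Ev S" and s': "s' \<in> Ev S" and eq: "\<sigma> s = \<sigma> s'"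
  shows "rS s = rS s'"
proof (rule ccontr)
  assume ne: "rS s \<noteq> rS s'"
  have "down S s \<inter> down S s' = {}"
  proof (rule ccontr)
    assume "down S s \<inter> down S s' \<noteq> {}"
    then obtain e where "Le S e s" "Le S e s'" unfolding down_def by blast
    then have "root S e = rS s" "root S e = rS s'" using root_mono[OF esS stS] by blast+
    then show False using ne by simp
  qed
  then have "down S s \<union> down S s' \<in> conf S" using st_join[OF esS stS down_conf[OF esS s] down_conf[OF esS s']] by blast
  then have "inj_on \<sigma> (down S s \<union> down S s')" using mapS_conf by blast
  moreover have "s \<in> down S s \<union> down S s'" "s' \<in> down S s \<union> down S s'"
    using es_facts(2)[OF esS s] es_facts(2)[OF esS s'] unfolding down_def by blast+
  ultimately have "s = s'" using eq unfolding inj_on_def by blast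
  then show False using ne by simp
qed

lemma cross:
  assumes g1: "good W1" and g2: "good W2" and v: "(p,q) \<in> W1" and v': "(p',q') \<in> W2"
    and eq: "p = p' \<or> q = q'"
  shows "(p,q) = (p',q') \<or> thr W1 (p,q) = thr W2 (p',q')"
proof -
  have m1: "f p = g q" using goodD(5)[OF g1 v] .
  have m2: "f p' = g q'" using goodD(5)[OF g2 v'] .
  show ?thesis
  proof (cases q)
    case (Inl a)
    obtain s where s: "p = Inl s" "\<sigma> s = Inl a" using match_Inl_a m1 Inl by metis
    show ?thesis
    proof (cases "p = p'")
      case True
      then have "q' = Inl a" using match_s_a m2 s by metis
      then show ?thesis using True Inl by simp
    next
      case False
      then have qq: "q' = Inl a" using eq Inl by simp
      obtain s' where s': "p' = Inl s'" "\<sigma> s' = Inl a" using match_Inl_a m2 qq by metis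
      have sy: "s \<in> yS W1" using v s unfolding yS_def by blast
      have s'y: "s' \<in> yS W2" using v' s' unfolding yS_def by blast
      have "rS s = rS s'" using SJ[OF yS_Ev[OF g1 sy] yS_Ev[OF g2 s'y]] s s' by simp
      define s0 where "s0 = rS s"
      obtain b0 where b0: "\<sigma> s0 = Inr b0" using min_img_S[OF rootS_in(2)[OF g1 sy]] unfolding s0_def by blast
      have p1: "(Inl s0, Inr (partner W1 s0)) \<in> W1 \<and> \<tau> (partner W1 s0) = Inl b0"
        using partner_ex[OF g1 _ b0] rootS_in(1)[OF g1 sy] unfolding s0_def by blast
      have p2: "(Inl s0, Inr (partner W2 s0)) \<in> W2 \<and> \<tau> (partner W2 s0) = Inl b0"
        using partner_ex[OF g2 _ b0] rootS_in(1)[OF g2 s'y] \<open>rS s = rS s'\<close> unfolding s0_def by simp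
      have e1: "partner W1 s0 \<in> Ev T" using p1 yT_Ev[OF g1] unfolding yT_def by blast
      have e2: "partner W2 s0 \<in> Ev T" using p2 yT_Ev[OF g2] unfolding yT_def by blast
      have "rT (partner W1 s0) = rT (partner W2 s0)" using TJ[OF e1 e2] p1 p2 by simp
      moreover have "thr W1 (p,q) = rT (partner W1 s0)" using thr_Inl[OF g1] v s unfolding thrS_def s0_def by simp
      moreover have "thr W2 (p',q') = rT (partner W2 s0)" using thr_Inl[OF g2] v' s' \<open>rS s = rS s'\<close> unfolding thrS_def s0_def by simp
      ultimately show ?thesis by simp
    qed
  next
    case (Inr t)
    show ?thesis
    proof (cases "q = q'")
      case True
      then have "q' = Inr t" using Inr by simp
      then show ?thesis using Inr by (simp add: thr_Inr)
    next
      case False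
      then have pp: "p = p'" using eq by simp
      have "g q' = g q" using m1 m2 pp by simp
      then obtain t' where t': "q' = Inr t'" "\<tau> t' = \<tau> t" using Inr by (cases q') (auto simp: g_Inl g_Inr)
      have ty: "t \<in> yT W1" using v Inr unfolding yT_def by blast
      have t'y: "t' \<in> yT W2" using v' t' unfolding yT_def by blast
      have "rT t = rT t'" using TJ[OF yT_Ev[OF g1 ty] yT_Ev[OF g2 t'y]] t' by simp
      then show ?thesis using Inr t' by (simp add: thr_Inr)
    qed
  qed
qed

end


context setting begin

lemma trancl_restrict:
  assumes gU: "good U" and sub: "W \<subseteq> U"
    and H: "\<And>v. v \<in> U \<Longrightarrow> Q (thr U v) \<Longrightarrow> v \<in> W"
    and r: "(v, w) \<in> (sec_rel X Y U)\<^sup>+" and q: "Q (thr U v)"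
  shows "(v, w) \<in> (sec_rel X Y W)\<^sup>+"
proof -
  have edge: "\<And>a b. (a,b) \<in> sec_rel X Y U \<Longrightarrow> Q (thr U a) \<Longrightarrow> (a,b) \<in> sec_rel X Y W"
  proof -
    fix a b assume ab: "(a,b) \<in> sec_rel X Y U" and qa: "Q (thr U a)"
    have abU: "a \<in> U" "b \<in> U" using ab unfolding sec_rel_def by auto
    have "thr U a = thr U b" using thr_rtrancl[OF gU] ab by blast
    then have "a \<in> W" "b \<in> W" using H abU qa by auto
    then show "(a,b) \<in> sec_rel X Y W" using ab unfolding sec_rel_def by auto
  qed
  show ?thesis using r
  proof (induction rule: trancl_induct)
    case (base y) then show ?case using edge q by blast
  next
    case (step y z)
    have "(v, y) \<in> (sec_rel X Y U)\<^sup>*" using step.hyps(1) by (rule trancl_into_rtrancl)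
    then have "thr U v = thr U y" using thr_rtrancl[OF gU] by blast
    then have yz: "(y, z) \<in> sec_rel X Y W" using edge step.hyps(2) q by simp
    show ?case by (rule trancl_into_trancl[OF step.IH yz])
  qed
qed

lemma st2_SC:
  assumes xc: "x \<in> conf SC" and e1: "extends SC x a1" and e2: "extends SC x a2"
    and dj: "down SC a1 \<inter> down SC a2 = {}"
  shows "insert a1 (insert a2 x) \<in> conf SC"
proof -
  have c1: "insert a1 x \<in> conf SC" and c2: "insert a2 x \<in> conf SC" using e1 e2 unfolding extends_def by blast+
  have xV: "x \<subseteq> V" using conf_Ev[OF xc] SC_simps(1) by simp
  have a1V: "a1 \<in> V" using conf_Ev[OF c1] SC_simps(1) by auto
  have a2V: "a2 \<in> V" using conf_Ev[OF c2] SC_simps(1) by auto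
  have a1P: "a1 \<in> Ev P" and a2P: "a2 \<in> Ev P" using a1V a2V by blast+
  define U1 where "U1 = \<Union>(insert a1 x)"
  define U2 where "U2 = \<Union>(insert a2 x)"
  have sec1: "secured_bij X Y f g U1" using conf_Con[OF c1] unfolding SC_simps U1_def by blast
  have sec2: "secured_bij X Y f g U2" using conf_Con[OF c2] unfolding SC_simps U2_def by blast
  have g1: "good U1" and ac1: "acyclic (sec_rel X Y U1)" using sec1 secured_iff by blast+
  have g2: "good U2" and ac2: "acyclic (sec_rel X Y U2)" using sec2 secured_iff by blast+
  have ga1: "good a1" using EvP_good[OF a1P] .
  have ga2: "good a2" using EvP_good[OF a2P] .
  define t1 where "t1 = thr a1 (top X Y a1)"
  define t2 where "t2 = thr a2 (top X Y a2)"
  have t12: "t1 \<noteq> t2"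
  proof
    assume eq: "t1 = t2"
    obtain c1 s1 where r1: "(Inr c1, Inr s1) \<in> a1" "\<tau> s1 = Inr c1" "minimal T s1" "s1 = t1"
      using V_root[OF a1P] unfolding t1_def by metis
    obtain c2 s2 where r2: "(Inr c2, Inr s2) \<in> a2" "\<tau> s2 = Inr c2" "minimal T s2" "s2 = t2"
      using V_root[OF a2P] unfolding t2_def by metis
    have "c1 = c2" using r1 r2 eq by simp
    then have "(Inr c1, Inr s1) \<in> a2" using r2 r1(4) eq by simp
    have uV: "{(Inr c1, Inr s1)} \<in> V" using single_V[OF r1(3) r1(2)] .
    have "{(Inr c1, Inr s1)} \<in> down SC a1" unfolding down_def SC_simps using uV a1V r1(1) by blast
    moreover have "{(Inr c1, Inr s1)} \<in> down SC a2" unfolding down_def SC_simps using uV a2V \<open>(Inr c1, Inr s1) \<in> a2\<close> by blast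
    ultimately show False using dj by blast
  qed
  have sub1: "a1 \<subseteq> U1" and sub2: "a2 \<subseteq> U2" unfolding U1_def U2_def by auto
  have th1: "\<And>v. v \<in> a1 \<Longrightarrow> thr U1 v = t1"
    using thr_sub[OF ga1 g1 sub1] thr_top[OF a1P] unfolding t1_def by simp
  have th2: "\<And>v. v \<in> a2 \<Longrightarrow> thr U2 v = t2"
    using thr_sub[OF ga2 g2 sub2] thr_top[OF a2P] unfolding t2_def by simp
  have d1: "\<And>v. v \<in> U1 \<Longrightarrow> v \<notin> U2 \<Longrightarrow> v \<in> a1" unfolding U1_def U2_def by blast
  have d2: "\<And>v. v \<in> U2 \<Longrightarrow> v \<notin> U1 \<Longrightarrow> v \<in> a2" unfolding U1_def U2_def by blast
  define U where "U = U1 \<union> U2"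
  have eqU: "\<Union>(insert a1 (insert a2 x)) = U" unfolding U_def U1_def U2_def by blast
  have crossU: "\<And>p q p' q'. (p,q) \<in> U \<Longrightarrow> (p',q') \<in> U \<Longrightarrow> p = p' \<or> q = q' \<Longrightarrow>
      ((p,q) \<in> U1 \<and> (p',q') \<in> U1) \<or> ((p,q) \<in> U2 \<and> (p',q') \<in> U2) \<or> (p,q) = (p',q')"
  proof -
    fix p q p' q' assume v: "(p,q) \<in> U" and v': "(p',q') \<in> U" and eq: "p = p' \<or> q = q'"
    show "((p,q) \<in> U1 \<and> (p',q') \<in> U1) \<or> ((p,q) \<in> U2 \<and> (p',q') \<in> U2) \<or> (p,q) = (p',q')"
    proof (cases "(p,q) \<in> U1 \<and> (p',q') \<in> U1 \<or> (p,q) \<in> U2 \<and> (p',q') \<in> U2")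
      case True then show ?thesis by blast
    next
      case False
      then have "((p,q) \<in> U1 \<and> (p,q) \<notin> U2 \<and> (p',q') \<in> U2 \<and> (p',q') \<notin> U1) \<or>
                 ((p,q) \<in> U2 \<and> (p,q) \<notin> U1 \<and> (p',q') \<in> U1 \<and> (p',q') \<notin> U2)"
        using v v' unfolding U_def by blast
      then show ?thesis
      proof
        assume h: "(p,q) \<in> U1 \<and> (p,q) \<notin> U2 \<and> (p',q') \<in> U2 \<and> (p',q') \<notin> U1"
        have "thr U1 (p,q) = t1" using th1 d1 h by blast
        moreover have "thr U2 (p',q') = t2" using th2 d2 h by blast
        moreover have "(p,q) = (p',q') \<or> thr U1 (p,q) = thr U2 (p',q')"
          using cross[OF g1 g2, of p q p' q'] h eq by blast
        ultimately show ?thesis using t12 by auto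
      next
        assume h: "(p,q) \<in> U2 \<and> (p,q) \<notin> U1 \<and> (p',q') \<in> U1 \<and> (p',q') \<notin> U2"
        have "thr U2 (p,q) = t2" using th2 d2 h by blast
        moreover have "thr U1 (p',q') = t1" using th1 d1 h by blast
        moreover have "(p',q') = (p,q) \<or> thr U1 (p',q') = thr U2 (p,q)"
          using cross[OF g1 g2, of p' q' p q] h eq by blast
        ultimately show ?thesis using t12 by auto
      qed
    qed
  qed
  have fun1: "\<And>p q q'. (p,q) \<in> U \<Longrightarrow> (p,q') \<in> U \<Longrightarrow> q = q'"
  proof -
    fix p q q' assume a: "(p,q) \<in> U" "(p,q') \<in> U"
    from crossU[OF a] show "q = q'" using goodD(3)[OF g1, of p q q'] goodD(3)[OF g2, of p q q'] by blast
  qed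
  have fun2: "\<And>p p' q. (p,q) \<in> U \<Longrightarrow> (p',q) \<in> U \<Longrightarrow> p = p'"
  proof -
    fix p p' q assume a: "(p,q) \<in> U" "(p',q) \<in> U"
    from crossU[OF a] show "p = p'" using goodD(4)[OF g1, of p q p'] goodD(4)[OF g2, of p q p'] by blast
  qed
  have matchU: "\<And>p q. (p,q) \<in> U \<Longrightarrow> f p = g q"
    using goodD(5)[OF g1] goodD(5)[OF g2] unfolding U_def by blast
  have agree: "\<And>s. s \<in> yS U1 \<Longrightarrow> s \<in> yS U2 \<Longrightarrow> thrS U1 s = thrS U2 s"
  proof -
    fix s assume s1: "s \<in> yS U1" and s2: "s \<in> yS U2"
    obtain b0 where b0: "\<sigma> (rS s) = Inr b0" using min_img_S[OF rootS_in(2)[OF g1 s1]] by blast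
    have w1: "(Inl (rS s), Inr (partner U1 (rS s))) \<in> U1" using partner_ex[OF g1 rootS_in(1)[OF g1 s1] b0] by blast
    have w2: "(Inl (rS s), Inr (partner U2 (rS s))) \<in> U2" using partner_ex[OF g2 rootS_in(1)[OF g2 s2] b0] by blast
    have "Inr (partner U1 (rS s)) = (Inr (partner U2 (rS s)) :: 'a + 't)"
      using fun1[of "Inl (rS s)"] w1 w2 unfolding U_def by blast
    then show "thrS U1 s = thrS U2 s" unfolding thrS_def by simp
  qed
  have thrSa1: "\<And>s q. (Inl s, q) \<in> U1 \<Longrightarrow> (Inl s, q) \<notin> U2 \<Longrightarrow> thrS U1 s = t1"
    using th1 d1 thr_Inl[OF g1] by metis
  have thrSa2: "\<And>s q. (Inl s, q) \<in> U2 \<Longrightarrow> (Inl s, q) \<notin> U1 \<Longrightarrow> thrS U2 s = t2"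
    using th2 d2 thr_Inl[OF g2] by metis
  have ySU: "yS U1 \<union> yS U2 \<in> conf S"
  proof -
    define y' where "y' = {s \<in> yS U2. thrS U2 s = t2}"
    define y'' where "y'' = {s \<in> yS U1. thrS U1 s \<noteq> t2}"
    have cy': "y' \<in> conf S"
    proof (rule sub_conf[OF esS good_yS[OF g2]])
      show "y' \<subseteq> yS U2" unfolding y'_def by blast
      fix a b assume "b \<in> y'" "Le S a b"
      moreover have "rS a = rS b" using root_mono[OF esS stS] \<open>Le S a b\<close> by blast
      ultimately show "a \<in> y'" unfolding y'_def thrS_def using yS_down[OF g2] by auto
    qed
    have cy'': "y'' \<in> conf S"
    proof (rule sub_conf[OF esS good_yS[OF g1]])
      show "y'' \<subseteq> yS U1" unfolding y''_def by blast
      fix a b assume "b \<in> y''" "Le S a b"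
      moreover have "rS a = rS b" using root_mono[OF esS stS] \<open>Le S a b\<close> by blast
      ultimately show "a \<in> y''" unfolding y''_def thrS_def using yS_down[OF g1] by auto
    qed
    have dis: "y'' \<inter> y' = {}" unfolding y'_def y''_def using agree by auto
    have cov: "yS U1 \<union> yS U2 = y'' \<union> y'"
    proof
      show "y'' \<union> y' \<subseteq> yS U1 \<union> yS U2" unfolding y'_def y''_def by blast
      show "yS U1 \<union> yS U2 \<subseteq> y'' \<union> y'"
      proof
        fix s assume "s \<in> yS U1 \<union> yS U2"
        then show "s \<in> y'' \<union> y'"
        proof
          assume s1: "s \<in> yS U1"
          show ?thesis
          proof (cases "s \<in> yS U2")
            case True then show ?thesis using agree s1 unfolding y'_def y''_def by auto
          next
            case False
            obtain q where q: "(Inl s, q) \<in> U1" using s1 unfolding yS_def by blast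
            have "(Inl s, q) \<notin> U2" using False unfolding yS_def by blast
            then have "thrS U1 s = t1" using thrSa1 q by blast
            then show ?thesis using s1 t12 unfolding y''_def by auto
          qed
        next
          assume s2: "s \<in> yS U2"
          show ?thesis
          proof (cases "s \<in> yS U1")
            case True then show ?thesis using agree s2 unfolding y'_def y''_def by auto
          next
            case False
            obtain q where q: "(Inl s, q) \<in> U2" using s2 unfolding yS_def by blast
            have "(Inl s, q) \<notin> U1" using False unfolding yS_def by blast
            then have "thrS U2 s = t2" using thrSa2 q by blast
            then show ?thesis using s2 unfolding y'_def by auto
          qed
        qed
      qed
    qed
    show ?thesis unfolding cov by (rule st_join[OF esS stS cy'' cy' dis])
  qed
  have yTU: "yT U1 \<union> yT U2 \<in> conf T"
  proof -
    define y' where "y' = {t \<in> yT U2. rT t = t2}"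
    define y'' where "y'' = {t \<in> yT U1. rT t \<noteq> t2}"
    have cy': "y' \<in> conf T"
    proof (rule sub_conf[OF esT good_yT[OF g2]])
      show "y' \<subseteq> yT U2" unfolding y'_def by blast
      fix a b assume "b \<in> y'" "Le T a b"
      moreover have "rT a = rT b" using root_mono[OF esT stT] \<open>Le T a b\<close> by blast
      ultimately show "a \<in> y'" unfolding y'_def using yT_down[OF g2] by auto
    qed
    have cy'': "y'' \<in> conf T"
    proof (rule sub_conf[OF esT good_yT[OF g1]])
      show "y'' \<subseteq> yT U1" unfolding y''_def by blast
      fix a b assume "b \<in> y''" "Le T a b"
      moreover have "rT a = rT b" using root_mono[OF esT stT] \<open>Le T a b\<close> by blast
      ultimately show "a \<in> y''" unfolding y''_def using yT_down[OF g1] by auto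
    qed
    have dis: "y'' \<inter> y' = {}" unfolding y'_def y''_def by auto
    have cov: "yT U1 \<union> yT U2 = y'' \<union> y'"
    proof
      show "y'' \<union> y' \<subseteq> yT U1 \<union> yT U2" unfolding y'_def y''_def by blast
      show "yT U1 \<union> yT U2 \<subseteq> y'' \<union> y'"
      proof
        fix t assume "t \<in> yT U1 \<union> yT U2"
        then show "t \<in> y'' \<union> y'"
        proof
          assume t1': "t \<in> yT U1"
          show ?thesis
          proof (cases "t \<in> yT U2")
            case True then show ?thesis using t1' unfolding y'_def y''_def by auto
          next
            case False
            obtain p where p: "(p, Inr t) \<in> U1" using t1' unfolding yT_def by blast
            have "(p, Inr t) \<notin> U2" using False unfolding yT_def by blast
            then have "thr U1 (p, Inr t) = t1" using th1 d1 p by blast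
            then have "rT t = t1" by (simp add: thr_Inr)
            then show ?thesis using t1' t12 unfolding y''_def by auto
          qed
        next
          assume t2': "t \<in> yT U2"
          show ?thesis
          proof (cases "t \<in> yT U1")
            case True then show ?thesis using t2' unfolding y'_def y''_def by auto
          next
            case False
            obtain p where p: "(p, Inr t) \<in> U2" using t2' unfolding yT_def by blast
            have "(p, Inr t) \<notin> U1" using False unfolding yT_def by blast
            then have "thr U2 (p, Inr t) = t2" using th2 d2 p by blast
            then have "rT t = t2" by (simp add: thr_Inr)
            then show ?thesis using t2' unfolding y'_def by auto
          qed
        qed
      qed
    qed
    show ?thesis unfolding cov by (rule st_join[OF esT stT cy'' cy' dis])
  qed
  have ySeq: "yS U = yS U1 \<union> yS U2" unfolding U_def yS_def by blast
  have yTeq: "yT U = yT U1 \<union> yT U2" unfolding U_def yT_def by blast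
  have f1: "fst ` U1 \<in> conf X" and f2: "fst ` U2 \<in> conf X" using goodD(1)[OF g1] goodD(1)[OF g2] .
  have s1: "snd ` U1 \<in> conf Y" and s2: "snd ` U2 \<in> conf Y" using goodD(2)[OF g1] goodD(2)[OF g2] .
  have fstU: "fst ` U \<in> conf X"
  proof (rule confI)
    show "finite (fst ` U)" unfolding U_def using conf_fin[OF f1] conf_fin[OF f2] by (simp add: image_Un)
    show evx: "fst ` U \<subseteq> Ev X" unfolding U_def using conf_Ev[OF f1] conf_Ev[OF f2] by (simp add: image_Un)
    show "\<And>a b. b \<in> fst ` U \<Longrightarrow> Le X a b \<Longrightarrow> a \<in> fst ` U"
    proof -
      fix a b assume "b \<in> fst ` U" "Le X a b"
      then show "a \<in> fst ` U" unfolding U_def image_Un using conf_down[OF f1] conf_down[OF f2] by blast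
    qed
    have cS: "Con S (Inl -` fst ` U)" using conf_Con[OF ySU] ySeq yS_eq by simp
    have tc: "\<tau> ` yT U \<in> conf DB" using mapT_conf[OF yTU[folded yTeq]] by blast
    have "Con C (Inr -` (\<tau> ` yT U))" using conf_Con[OF tc] by (simp add: par_simps)
    moreover have "Inr -` fst ` U \<subseteq> Inr -` (\<tau> ` yT U)"
    proof
      fix c assume "c \<in> Inr -` fst ` U"
      then obtain q where q: "(Inr c, q) \<in> U" by force
      obtain t where t: "q = Inr t" "\<tau> t = Inr c" using match_Inr_c[OF matchU[OF q]] by blast
      have "t \<in> yT U" using q t unfolding yT_def by blast
      then show "c \<in> Inr -` (\<tau> ` yT U)" using t by force
    qed
    ultimately have cC: "Con C (Inr -` fst ` U)" using es_facts(9)[OF esC] by blast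
    show "Con X (fst ` U)" using evx cS cC by (simp add: par_simps)
  qed
  have sndU: "snd ` U \<in> conf Y"
  proof (rule confI)
    show "finite (snd ` U)" unfolding U_def using conf_fin[OF s1] conf_fin[OF s2] by (simp add: image_Un)
    show evy: "snd ` U \<subseteq> Ev Y" unfolding U_def using conf_Ev[OF s1] conf_Ev[OF s2] by (simp add: image_Un)
    show "\<And>a b. b \<in> snd ` U \<Longrightarrow> Le Y a b \<Longrightarrow> a \<in> snd ` U"
    proof -
      fix a b assume "b \<in> snd ` U" "Le Y a b"
      then show "a \<in> snd ` U" unfolding U_def image_Un using conf_down[OF s1] conf_down[OF s2] by blast
    qed
    have cT: "Con T (Inr -` snd ` U)" using conf_Con[OF yTU] yTeq yT_eq by simp
    have sc: "\<sigma> ` yS U \<in> conf DA" using mapS_conf[OF ySU[folded ySeq]] by blast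
    have "Con A (Inl -` (\<sigma> ` yS U))" using conf_Con[OF sc] by (simp add: par_simps dual_simps)
    moreover have "Inl -` snd ` U \<subseteq> Inl -` (\<sigma> ` yS U)"
    proof
      fix a assume "a \<in> Inl -` snd ` U"
      then obtain p where p: "(p, Inl a) \<in> U" by force
      obtain s where s: "p = Inl s" "\<sigma> s = Inl a" using match_Inl_a[OF matchU[OF p]] by blast
      have "s \<in> yS U" using p s unfolding yS_def by blast
      then show "a \<in> Inl -` (\<sigma> ` yS U)" using s by force
    qed
    ultimately have cA: "Con A (Inl -` snd ` U)" using es_facts(9)[OF esA] by blast
    show "Con Y (snd ` U)" using evy cA cT by (simp add: par_simps)
  qed
  have gU: "good U" unfolding good_def
    using fstU sndU fun1 fun2 matchU by blast
  have acU: "acyclic (sec_rel X Y U)"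
    unfolding acyclic_def
  proof (intro allI notI)
    fix v assume cyc: "(v, v) \<in> (sec_rel X Y U)\<^sup>+"
    show False
    proof (cases "thr U v = t2")
      case True
      have H: "\<And>w. w \<in> U \<Longrightarrow> thr U w = t2 \<Longrightarrow> w \<in> U2"
      proof (rule ccontr)
        fix w assume w: "w \<in> U" "thr U w = t2" "w \<notin> U2"
        then have "w \<in> U1" unfolding U_def by blast
        moreover have "U1 \<subseteq> U" unfolding U_def by blast
        ultimately have "thr U w = thr U1 w" using thr_sub[OF g1 gU] by metis
        also have "\<dots> = t1" using th1 d1 w \<open>w \<in> U1\<close> by blast
        finally show False using w t12 by simp
      qed
      have sU2: "U2 \<subseteq> U" unfolding U_def by blast
      have "(v, v) \<in> (sec_rel X Y U2)\<^sup>+"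
        using trancl_restrict[of U U2 "\<lambda>x. x = t2" v v, OF gU sU2 H cyc True] .
      then show False using ac2 unfolding acyclic_def by blast
    next
      case False
      have H: "\<And>w. w \<in> U \<Longrightarrow> thr U w \<noteq> t2 \<Longrightarrow> w \<in> U1"
      proof (rule ccontr)
        fix w assume w: "w \<in> U" "thr U w \<noteq> t2" "w \<notin> U1"
        then have "w \<in> U2" unfolding U_def by blast
        moreover have "U2 \<subseteq> U" unfolding U_def by blast
        ultimately have "thr U w = thr U2 w" using thr_sub[OF g2 gU] by metis
        also have "\<dots> = t2" using th2 d2 w \<open>w \<in> U2\<close> by blast
        finally show False using w by simp
      qed
      have sU1: "U1 \<subseteq> U" unfolding U_def by blast
      have "(v, v) \<in> (sec_rel X Y U1)\<^sup>+"
        using trancl_restrict[of U U1 "\<lambda>x. x \<noteq> t2" v v, OF gU sU1 H cyc False] .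
      then show False using ac1 unfolding acyclic_def by blast
    qed
  qed
  have secU: "secured_bij X Y f g U" using gU acU secured_iff by blast
  show ?thesis
  proof (rule confI)
    show "finite (insert a1 (insert a2 x))" using conf_fin[OF xc] by simp
    show "insert a1 (insert a2 x) \<subseteq> Ev SC" using xV a1V a2V SC_simps(1) by simp
    show "Con SC (insert a1 (insert a2 x))"
      unfolding SC_simps eqU using xV a1V a2V conf_fin[OF xc] secU by simp
    fix a b assume b: "b \<in> insert a1 (insert a2 x)" and le: "Le SC a b"
    show "a \<in> insert a1 (insert a2 x)"
    proof (cases "b = a1")
      case True
      then have "a \<in> insert a1 x" using conf_down[OF c1, of b a] le by simp
      then show ?thesis by blast
    next
      case False
      then have "b \<in> insert a2 x" using b by simp
      then have "a \<in> insert a2 x" using conf_down[OF c2, of b a] le by simp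
      then show ?thesis by blast
    qed
  qed
qed

lemma main: "negative SC \<and> single_threaded SC"
proof
  show "negative SC" by (rule neg_SC)
  show "single_threaded SC" unfolding single_threaded_def
  proof (intro conjI ballI allI impI)
    fix a assume "a \<in> Ev SC"
    then show "\<exists>!m. m \<in> down SC a \<and> minimal SC m" using st1_SC SC_simps(1) by simp
  next
    fix x a1 a2
    assume h: "extends SC x a1 \<and> extends SC x a2 \<and> insert a1 (insert a2 x) \<notin> conf SC"
    have xc: "x \<in> conf SC" using h unfolding extends_def by blast
    show "down SC a1 \<inter> down SC a2 \<noteq> {}"
      using st2_SC[OF xc] h by blast
  qed
qed

end


theorem mainTheorem11:
  fixes S :: "'s essp" and T :: "'t essp"
    and A :: "'a tcg" and B :: "'b tcg" and C :: "'c tcg"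
    and \<sigma> :: "'s \<Rightarrow> 'a + 'b" and \<tau> :: "'t \<Rightarrow> 'b + 'c"
  assumes "is_tcg A" and "is_tcg B" and "is_tcg C"
    and "negative A" and "negative B" and "negative C"
    and "sim_strategy S (par (dual A) B) \<sigma>" and "sim_strategy T (par (dual B) C) \<tau>"
    and "negative S" and "negative T"
    and "single_threaded S" and "single_threaded T"
  shows "negative (strat_comp S T A C \<sigma> \<tau>) \<and> single_threaded (strat_comp S T A C \<sigma> \<tau>)"
  by (rule setting.main[OF setting.intro[OF assms]])

end
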